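(* Let $N\geq 3$ be a prime integer and let $q\in\mathbb{C}$ satisfy $q^N=1$, $q\neq 1$. Let $X\subset\mathbb{R}^{N-1}$ be a nonempty convex subspace. Then the index map $\eta:(C^q_*(X),\partial)\to(\mathbb{Z}[q],[*]_q)$ induces an isomorphism in amplitude homology; that is, for every amplitude $1\leq m\leq N-1$ and every degree $n\in\mathbb{Z}$, the induced map $H_{m,n}(C^q_*(X))\to H_{m,n}(\mathbb{Z}[q],[*]_q)$ is an isomorphism of $\mathbb{Z}[q]$-modules.
   Context: $q$-numbers: $[k]_q=1+q+\cdots+q^{k-1}$ for $k\geq 1$. Singular $q$-chains: for a topological space $X$, $C^q_n(X)$ is the free $\mathbb{Z}[q]$-module with basis the continuous maps $\sigma:\Delta^n\to X$ (singular $n$-simplices), where $\Delta^n\subset\mathbb{R}^{n+1}$ is the convex hull of the standard basis $e_0,\dots,e_n$; $C^q_n(X)=0$ for $n<0$. For $0\leq j\leq n$, the $j$-th face of an $n$-simplex $\sigma$ ($n\geq 1$) is $\partial_j\sigma=\sigma\circ\lambda_j$, where $\lambda_j:\Delta^{n-1}\to\Delta^n$ is the affine map sending $e_0,\dots,e_{n-1}$ in order to $e_0,\dots,\widehat{e_j},\dots,e_n$. The border map $\partial:C^q_n(X)\to C^q_{n-1}(X)$ is the linear map $\partial=\sum_{j=0}^n q^j\partial_j$ for $n\ge1$, and $\partial=0$ on $C^q_0(X)$; one has $\partial^N=0$. Amplitude homology: for a graded module $M_*$ with a degree $-1$ endomorphism $\partial$ satisfying $\partial^N=0$, and $1\leq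 m\leq N-1$, $H_{m,n}(M)=\ker(\partial^m:M_n\to M_{n-m})/\operatorname{im}(\partial^{N-m}:M_{n+N-m}\to M_n)$. The $N$-complex $(\mathbb{Z}[q],[*]_q)$ has $\mathbb{Z}[q]$ in each degree $0\leq n\leq N-2$ and $0$ in all other degrees, with differential from degree $n$ to degree $n-1$ given by multiplication by $[n+1]_q$ for $1\leq n\leq N-2$ (and zero otherwise). The index map $\eta$ is the $\mathbb{Z}[q]$-linear graded map sending each singular $n$-simplex to $1\in\mathbb{Z}[q]$ in degree $n$ for $0\leq n\leq N-2$, and sending $C^q_n(X)$ to $0$ for $n\geq N-1$; it commutes with the differentials. *)

theory Defs
  imports "HOL-Analysis.Analysis" "HOL-Homology.Homology" "HOL-Library.Function_Algebras"
begin

definition Zq :: "complex \<Rightarrow> complex set" where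
  "Zq q = {z. \<exists>p::int poly. z = poly (map_poly of_int p) q}"

definition qnum :: "complex \<Rightarrow> nat \<Rightarrow> complex" where
  "qnum q k = (\<Sum>i<k. q ^ i)"

fun dpow :: "(int \<Rightarrow> 'v \<Rightarrow> 'v) \<Rightarrow> nat \<Rightarrow> int \<Rightarrow> 'v \<Rightarrow> 'v" where
  "dpow d 0 n x = x"
| "dpow d (Suc k) n x = d (n - int k) (dpow d k n x)"

definition amp_ker :: "(int \<Rightarrow> 'v::ab_group_add set) \<Rightarrow> (int \<Rightarrow> 'v \<Rightarrow> 'v) \<Rightarrow> nat \<Rightarrow> int \<Rightarrow> 'v set" where
  "amp_ker M d m n = {x \<in> M n. dpow d m n x = 0}"

definition amp_im :: "(int \<Rightarrow> 'v::ab_group_add set) \<Rightarrow> (int \<Rightarrow> 'v \<Rightarrow> 'v) \<Rightarrow> nat \<Rightarrow> nat \<Rightarrow> int \<Rightarrow> 'v set" where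
  "amp_im M d N m n = dpow d (N - m) (n + int (N - m)) ` M (n + int (N - m))"

definition amp_rel :: "(int \<Rightarrow> 'v::ab_group_add set) \<Rightarrow> (int \<Rightarrow> 'v \<Rightarrow> 'v) \<Rightarrow> nat \<Rightarrow> nat \<Rightarrow> int \<Rightarrow> ('v \<times> 'v) set" where
  "amp_rel M d N m n = {(x, y). x \<in> amp_ker M d m n \<and> y \<in> amp_ker M d m n \<and> x - y \<in> amp_im M d N m n}"

text \<open>H_{m,n}(M) = ker(d^m : M_n -> M_{n-m}) / im(d^{N-m} : M_{n+N-m} -> M_n), as a set of cosets.\<close>
definition amp_hom :: "(int \<Rightarrow> 'v::ab_group_add set) \<Rightarrow> (int \<Rightarrow> 'v \<Rightarrow> 'v) \<Rightarrow> nat \<Rightarrow> nat \<Rightarrow> int \<Rightarrow> 'v set set" where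
  "amp_hom M d N m n = amp_ker M d m n // amp_rel M d N m n"

definition amp_induced :: "(int \<Rightarrow> 'v \<Rightarrow> 'w) \<Rightarrow> (int \<Rightarrow> 'w::ab_group_add set) \<Rightarrow> (int \<Rightarrow> 'w \<Rightarrow> 'w)
     \<Rightarrow> nat \<Rightarrow> nat \<Rightarrow> int \<Rightarrow> 'v set \<Rightarrow> 'w set" where
  "amp_induced f M' d' N m n C = amp_rel M' d' N m n `` (f n ` C)"

definition qchains :: "complex \<Rightarrow> 'a topology \<Rightarrow> int \<Rightarrow> (((nat \<Rightarrow> real) \<Rightarrow> 'a) \<Rightarrow> complex) set" where
  "qchains q X n = {c. finite {\<sigma>. c \<sigma> \<noteq> 0} \<and> (\<forall>\<sigma>. c \<sigma> \<in> Zq q)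
       \<and> (\<forall>\<sigma>. c \<sigma> \<noteq> 0 \<longrightarrow> n \<ge> 0 \<and> singular_simplex (nat n) X \<sigma>)}"

definition qbd :: "complex \<Rightarrow> int \<Rightarrow> (((nat \<Rightarrow> real) \<Rightarrow> 'a) \<Rightarrow> complex) \<Rightarrow> (((nat \<Rightarrow> real) \<Rightarrow> 'a) \<Rightarrow> complex)" where
  "qbd q n c = (if n \<ge> 1 then
      (\<lambda>\<tau>. \<Sum>\<sigma>\<in>{\<sigma>. c \<sigma> \<noteq> 0}. c \<sigma> * (\<Sum>j\<le>nat n. if singular_face (nat n) j \<sigma> = \<tau> then q ^ j else 0))
    else 0)"

definition zq_cx :: "complex \<Rightarrow> nat \<Rightarrow> int \<Rightarrow> complex set" where
  "zq_cx q N n = (if 0 \<le> n \<and> n \<le> int N - 2 then Zq q else {0})"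

definition zq_d :: "complex \<Rightarrow> nat \<Rightarrow> int \<Rightarrow> complex \<Rightarrow> complex" where
  "zq_d q N n x = (if 1 \<le> n \<and> n \<le> int N - 2 then qnum q (nat n + 1) * x else 0)"

definition eta :: "nat \<Rightarrow> int \<Rightarrow> (((nat \<Rightarrow> real) \<Rightarrow> 'a) \<Rightarrow> complex) \<Rightarrow> complex" where
  "eta N n c = (if 0 \<le> n \<and> n \<le> int N - 2 then (\<Sum>\<sigma>\<in>{\<sigma>. c \<sigma> \<noteq> 0}. c \<sigma>) else 0)"

end

theory Submission
  imports Defs
begin


lemma map_poly_of_int_add: "map_poly (of_int::int\<Rightarrow>complex) (p + r) = map_poly of_int p + map_poly of_int r"
  by (rule poly_eqI) (simp add: coeff_map_poly)

lemma map_poly_of_int_minus: "map_poly (of_int::int\<Rightarrow>complex) (p - r) = map_poly of_int p - map_poly of_int r"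
  by (rule poly_eqI) (simp add: coeff_map_poly)

lemma map_poly_of_int_smult: "map_poly (of_int::int\<Rightarrow>complex) (Polynomial.smult a r) = Polynomial.smult (of_int a) (map_poly of_int r)"
  by (rule poly_eqI) (simp add: coeff_map_poly)

lemma map_poly_of_int_pCons: "map_poly (of_int::int\<Rightarrow>complex) (pCons a r) = pCons (of_int a) (map_poly of_int r)"
  by (rule poly_eqI) (simp add: coeff_map_poly coeff_pCons split: nat.split)

lemma Zq_add: assumes "x \<in> Zq q" "y \<in> Zq q" shows "x + y \<in> Zq q"
proof -
  obtain p r where "x = poly (map_poly of_int p) q" "y = poly (map_poly of_int r) q" using assms unfolding Zq_def by auto
  then have "x + y = poly (map_poly of_int (p + r)) q" by (simp add: map_poly_of_int_add)
  then show ?thesis unfolding Zq_def by blast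
qed

lemma Zq_diff: assumes "x \<in> Zq q" "y \<in> Zq q" shows "x - y \<in> Zq q"
proof -
  obtain p r where "x = poly (map_poly of_int p) q" "y = poly (map_poly of_int r) q" using assms unfolding Zq_def by auto
  then have "x - y = poly (map_poly of_int (p - r)) q" by (simp add: map_poly_of_int_minus)
  then show ?thesis unfolding Zq_def by blast
qed

lemma Zq_of_int: "of_int a \<in> Zq q"
  unfolding Zq_def by (auto intro!: exI[of _ "[:a:]"] simp: map_poly_of_int_pCons)

lemma Zq_0: "0 \<in> Zq q" using Zq_of_int[of 0] by simp
lemma Zq_1: "1 \<in> Zq q" using Zq_of_int[of 1] by simp

lemma Zq_uminus: "x \<in> Zq q \<Longrightarrow> - x \<in> Zq q"
  using Zq_diff[OF Zq_0] by fastforce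

lemma Zq_qmult: assumes "x \<in> Zq q" shows "q * x \<in> Zq q"
proof -
  obtain p where "x = poly (map_poly of_int p) q" using assms unfolding Zq_def by auto
  then have "q * x = poly (map_poly of_int (pCons 0 p)) q" by (simp add: map_poly_of_int_pCons)
  then show ?thesis unfolding Zq_def by blast
qed

lemma Zq_q: "q \<in> Zq q" using Zq_qmult[OF Zq_1] by simp

lemma Zq_intmult: assumes "x \<in> Zq q" shows "of_int a * x \<in> Zq q"
proof -
  obtain p where "x = poly (map_poly of_int p) q" using assms unfolding Zq_def by auto
  then have "of_int a * x = poly (map_poly of_int (Polynomial.smult a p)) q" by (simp add: map_poly_of_int_smult)
  then show ?thesis unfolding Zq_def by blast
qed

lemma Zq_mult: assumes "x \<in> Zq q" "y \<in> Zq q" shows "x * y \<in> Zq q"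
proof -
  obtain p where p: "x = poly (map_poly of_int p) q" using assms(1) unfolding Zq_def by auto
  have "poly (map_poly of_int p) q * y \<in> Zq q" for p
  proof (induction p)
    case 0 then show ?case by (simp add: Zq_0)
  next
    case (pCons a p)
    have "poly (map_poly of_int (pCons a p)) q * y = of_int a * y + q * (poly (map_poly of_int p) q * y)"
      by (simp add: map_poly_of_int_pCons algebra_simps)
    then show ?case using pCons assms(2) by (simp add: Zq_add Zq_intmult Zq_qmult)
  qed
  then show ?thesis using p by simp
qed

lemma Zq_sum: "(\<And>i. i \<in> A \<Longrightarrow> f i \<in> Zq q) \<Longrightarrow> sum f A \<in> Zq q"
  by (induction A rule: infinite_finite_induct) (auto simp: Zq_0 Zq_add)

lemma Zq_prod: "(\<And>i. i \<in> A \<Longrightarrow> f i \<in> Zq q) \<Longrightarrow> prod f A \<in> Zq q"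
  by (induction A rule: infinite_finite_induct) (auto simp: Zq_1 Zq_mult)

lemma Zq_power: "x \<in> Zq q \<Longrightarrow> x ^ n \<in> Zq q"
  by (induction n) (auto simp: Zq_1 Zq_mult)

lemma qnum_Zq: "qnum q k \<in> Zq q"
  unfolding qnum_def by (intro Zq_sum Zq_power Zq_q)

lemma qnum_add: "qnum q (a + b) = qnum q a + q ^ a * qnum q b"
  unfolding qnum_def
  by (induction b) (auto simp: algebra_simps power_add)

lemma qnum_mult: "qnum q (a * b) = qnum q a * qnum (q ^ a) b"
  unfolding qnum_def
proof (induction b)
  case (Suc b)
  have "(\<Sum>i<a * Suc b. q ^ i) = (\<Sum>i<a * b + a. q ^ i)" by (simp add: algebra_simps)
  also have "\<dots> = (\<Sum>i<a*b. q^i) + q^(a*b) * (\<Sum>i<a. q^i)"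
    using qnum_add[of q "a*b" a] by (simp add: qnum_def)
  finally show ?case using Suc by (simp add: algebra_simps power_mult)
qed simp

lemma qnum_N: assumes "q ^ N = 1" "q \<noteq> 1" shows "qnum q N = 0"
proof -
  have "(1 - q) * qnum q N = 1 - q ^ N" unfolding qnum_def
  proof (induction N)
    case (Suc n)
    have "(1-q) * (\<Sum>i<Suc n. q^i) = (1-q)*(\<Sum>i<n. q^i) + (1-q)*q^n" by (simp add: distrib_left)
    also have "\<dots> = 1 - q ^ Suc n" using Suc by (simp add: algebra_simps)
    finally show ?case .
  qed simp
  then show ?thesis using assms by simp
qed

lemma qnum_mod: assumes "q ^ N = 1" "q \<noteq> 1" shows "qnum q a = qnum q (a mod N)"
proof -
  have "qnum q (a mod N + N * k) = qnum q (a mod N)" for k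
  proof (induction k)
    case (Suc k)
    have "qnum q (a mod N + N * Suc k) = qnum q (a mod N + N * k + N)" by (simp add: algebra_simps)
    also have "\<dots> = qnum q (a mod N + N * k)"
      by (simp only: qnum_add qnum_N[OF assms]) simp
    finally show ?case using Suc by simp
  qed simp
  from this[of "a div N"] show ?thesis by simp
qed

lemma qnum_unit:
  assumes "prime N" "q ^ N = 1" "q \<noteq> 1" "1 \<le> j" "j < N"
  shows "\<exists>u\<in>Zq q. qnum q j * u = 1"
proof -
  have "coprime j N" using assms
    by (metis coprime_commute nat_dvd_not_less prime_imp_coprime_nat zero_less_iff_neq_zero not_one_le_zero)
  have N1: "N > 1" using assms prime_gt_1_nat by blast
  obtain j' y where "j * j' = N * y + gcd j N" using bezout_nat[of j N] assms by auto
  then have "j * j' = N * y + 1" using \<open>coprime j N\<close> by simp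
  then have "(j*j') mod N = (1 + N * y) mod N" by simp
  also have "\<dots> = 1 mod N" by (metis mod_mult_self2)
  finally have j': "(j*j') mod N = 1" using N1 by simp
  have "qnum q j * qnum (q ^ j) j' = qnum q (j * j')" by (simp add: qnum_mult)
  also have "\<dots> = qnum q ((j*j') mod N)" by (rule qnum_mod[OF assms(2,3)])
  also note j'
  finally have "qnum q j * qnum (q ^ j) j' = 1" by (simp add: qnum_def)
  moreover have "qnum (q ^ j) j' \<in> Zq q" unfolding qnum_def
    by (intro Zq_sum Zq_power Zq_q)
  ultimately show ?thesis by blast
qed


lemma dpow_Suc': "dpow d (Suc k) n x = dpow d k (n - 1) (d n x)"
  by (induction k arbitrary: x) (simp_all add: algebra_simps)

lemma dpow_add: "dpow d (a + b) n x = dpow d a (n - int b) (dpow d b n x)"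
  by (induction a) (simp_all add: algebra_simps)

lemma dpow_mem:
  assumes "\<And>n x. x \<in> M n \<Longrightarrow> d n x \<in> M (n - 1)" "x \<in> M n"
  shows "dpow d k n x \<in> M (n - int k)"
  by (induction k) (use assms in \<open>auto simp: algebra_simps dest: assms(1)\<close>)

locale grp_cx =
  fixes M :: "int \<Rightarrow> 'v::ab_group_add set" and d :: "int \<Rightarrow> 'v \<Rightarrow> 'v"
  assumes M_zero: "0 \<in> M n"
    and M_diff: "x \<in> M n \<Longrightarrow> y \<in> M n \<Longrightarrow> x - y \<in> M n"
    and d_M: "x \<in> M n \<Longrightarrow> d n x \<in> M (n - 1)"
    and d_diff: "x \<in> M n \<Longrightarrow> y \<in> M n \<Longrightarrow> d n (x - y) = d n x - d n y"
begin

lemma M_uminus: "x \<in> M n \<Longrightarrow> - x \<in> M n"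
  using M_diff[OF M_zero, of x n] by simp

lemma M_add: "x \<in> M n \<Longrightarrow> y \<in> M n \<Longrightarrow> x + y \<in> M n"
  using M_diff[of x n "- y"] M_uminus by simp

lemma d_zero: "d n 0 = 0"
  using d_diff[OF M_zero M_zero, of n] by simp

lemma d_add: "x \<in> M n \<Longrightarrow> y \<in> M n \<Longrightarrow> d n (x + y) = d n x + d n y"
  using d_diff[of x n "- y"] d_diff[OF M_zero, of "y" n] M_uminus d_zero by simp

lemma dpow_M: "x \<in> M n \<Longrightarrow> dpow d k n x \<in> M (n - int k)"
  by (rule dpow_mem[where M=M, OF d_M])

lemma dpow_diff: "x \<in> M n \<Longrightarrow> y \<in> M n \<Longrightarrow> dpow d k n (x - y) = dpow d k n x - dpow d k n y"
proof (induction k)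
  case (Suc k)
  then show ?case using d_diff[OF dpow_M dpow_M] by simp
qed simp

lemma dpow_zero: "dpow d k n 0 = 0"
  using dpow_diff[OF M_zero M_zero, where n=n and k=k] by simp

lemma h_dummy: True by simp

lemma dpow_add': "x \<in> M n \<Longrightarrow> y \<in> M n \<Longrightarrow> dpow d k n (x + y) = dpow d k n x + dpow d k n y"
  using dpow_diff[of x n "- y" k] dpow_diff[OF M_zero, of y n k] M_uminus dpow_zero by simp

lemma im_zero: "0 \<in> amp_im M d N m n"
  unfolding amp_im_def using dpow_zero M_zero by (metis image_eqI)

lemma im_diff: "x \<in> amp_im M d N m n \<Longrightarrow> y \<in> amp_im M d N m n \<Longrightarrow> x - y \<in> amp_im M d N m n"
  unfolding amp_im_def by (auto simp flip: dpow_diff intro!: image_eqI M_diff)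

lemma im_uminus: "x \<in> amp_im M d N m n \<Longrightarrow> - x \<in> amp_im M d N m n"
  using im_diff[OF im_zero] by fastforce

lemma im_add: "x \<in> amp_im M d N m n \<Longrightarrow> y \<in> amp_im M d N m n \<Longrightarrow> x + y \<in> amp_im M d N m n"
  using im_diff[of x N m n "- y"] im_uminus by fastforce

lemma ker_diff: "x \<in> amp_ker M d m n \<Longrightarrow> y \<in> amp_ker M d m n \<Longrightarrow> x - y \<in> amp_ker M d m n"
  unfolding amp_ker_def by (auto simp: dpow_diff M_diff)

lemma ker_zero: "0 \<in> amp_ker M d m n"
  unfolding amp_ker_def by (auto simp: dpow_zero M_zero)

lemma equiv_rel: "equiv (amp_ker M d m n) (amp_rel M d N m n)"
proof (rule equivI)
  show "refl_on (amp_ker M d m n) (amp_rel M d N m n)"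
    unfolding refl_on_def amp_rel_def using im_zero by auto
  show "amp_rel M d N m n \<subseteq> amp_ker M d m n \<times> amp_ker M d m n"
    unfolding amp_rel_def by auto
  show "sym (amp_rel M d N m n)"
    unfolding sym_def amp_rel_def using im_uminus by fastforce
  show "trans (amp_rel M d N m n)"
    unfolding trans_def amp_rel_def using im_add by fastforce
qed

end


definition csmul :: "complex \<Rightarrow> ('s \<Rightarrow> complex) \<Rightarrow> ('s \<Rightarrow> complex)" where
  "csmul a x = (\<lambda>\<sigma>. a * x \<sigma>)"

definition esum :: "('s \<Rightarrow> complex) \<Rightarrow> complex" where
  "esum x = (\<Sum>\<sigma>\<in>{\<sigma>. x \<sigma> \<noteq> 0}. x \<sigma>)"

lemma csmul_csmul [simp]: "csmul a (csmul b x) = csmul (a * b) x"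
  by (simp add: csmul_def mult.assoc)
lemma csmul_one [simp]: "csmul 1 x = x" by (simp add: csmul_def)
lemma csmul_zero [simp]: "csmul a 0 = 0" by (simp add: csmul_def fun_eq_iff)
lemma csmul_add_self: "x + csmul a x = csmul (1 + a) x"
  by (simp add: csmul_def fun_eq_iff algebra_simps)
lemma csmul_add: "csmul a x + csmul a y = csmul a (x + y)"
  by (simp add: csmul_def fun_eq_iff algebra_simps)

lemma esum_superset: "finite S \<Longrightarrow> {\<sigma>. x \<sigma> \<noteq> 0} \<subseteq> S \<Longrightarrow> esum x = sum x S"
  unfolding esum_def by (rule sum.mono_neutral_left) auto

lemma esum_lin:
  assumes "finite {\<sigma>. x \<sigma> \<noteq> 0}" "finite {\<sigma>. y \<sigma> \<noteq> 0}"
  shows "esum (\<lambda>\<sigma>. a * x \<sigma> + y \<sigma>) = a * esum x + esum y"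
proof -
  let ?S = "{\<sigma>. x \<sigma> \<noteq> 0} \<union> {\<sigma>. y \<sigma> \<noteq> 0}"
  have "esum (\<lambda>\<sigma>. a * x \<sigma> + y \<sigma>) = (\<Sum>\<sigma>\<in>?S. a * x \<sigma> + y \<sigma>)"
    by (rule esum_superset) (use assms in auto)
  also have "\<dots> = a * sum x ?S + sum y ?S" by (simp add: sum.distrib sum_distrib_left)
  also have "sum x ?S = esum x" by (rule esum_superset[symmetric]) (use assms in auto)
  also have "sum y ?S = esum y" by (rule esum_superset[symmetric]) (use assms in auto)
  finally show ?thesis .
qed

lemma esum_diff:
  assumes "finite {\<sigma>. x \<sigma> \<noteq> 0}" "finite {\<sigma>. y \<sigma> \<noteq> 0}"
  shows "esum (x - y) = esum x - esum y"
proof -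
  have "finite {\<sigma>. - y \<sigma> \<noteq> 0}" using assms by simp
  from esum_lin[OF assms(1) this, of 1] have "esum (\<lambda>\<sigma>. x \<sigma> + - y \<sigma>) = esum x + esum (\<lambda>\<sigma>. - y \<sigma>)" by simp
  moreover have "esum (\<lambda>\<sigma>. - y \<sigma>) = - esum y" unfolding esum_def by (simp add: sum_negf)
  ultimately show ?thesis by (simp add: fun_diff_def)
qed

lemma esum_csmul:
  assumes "finite {\<sigma>. x \<sigma> \<noteq> 0}"
  shows "esum (csmul a x) = a * esum x"
  using esum_lin[OF assms, of "\<lambda>_. 0" a] by (simp add: csmul_def esum_def)

lemma esum_zero [simp]: "esum 0 = 0" by (simp add: esum_def)

primrec hpow :: "(int \<Rightarrow> 'v \<Rightarrow> 'v) \<Rightarrow> nat \<Rightarrow> int \<Rightarrow> 'v \<Rightarrow> 'v" where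
  "hpow h 0 n y = y"
| "hpow h (Suc j) n y = h (n + int j) (hpow h j n y)"

definition qfact :: "complex \<Rightarrow> nat \<Rightarrow> complex" where
  "qfact q j = (\<Prod>i<j. qnum q (Suc i))"

lemma Zq_unit_prod:
  assumes "\<And>i. i \<in> A \<Longrightarrow> \<exists>u\<in>Zq q. f i * u = 1"
  shows "\<exists>u\<in>Zq q. prod f A * u = 1"
  using assms
proof (induction A rule: infinite_finite_induct)
  case (insert x F)
  then obtain u v where "u \<in> Zq q" "f x * u = 1" "v \<in> Zq q" "prod f F * v = 1" by blast
  then show ?case using insert by (intro bexI[of _ "u * v"]) (auto simp: Zq_mult algebra_simps)
qed (auto intro: Zq_1)

lemma qnum_Suc: "qnum q (Suc j) = 1 + q * qnum q j"
  using qnum_add[of q 1 j] by (simp add: qnum_def)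

locale qcx = grp_cx C d
  for C :: "int \<Rightarrow> ('s \<Rightarrow> complex) set" and d +
  fixes h :: "int \<Rightarrow> ('s \<Rightarrow> complex) \<Rightarrow> ('s \<Rightarrow> complex)" and cst :: "int \<Rightarrow> 's \<Rightarrow> complex"
    and q :: complex and N :: nat
  assumes C_fin: "x \<in> C n \<Longrightarrow> finite {\<sigma>. x \<sigma> \<noteq> 0}"
    and C_val: "x \<in> C n \<Longrightarrow> x \<sigma> \<in> Zq q"
    and C_smul: "a \<in> Zq q \<Longrightarrow> x \<in> C n \<Longrightarrow> csmul a x \<in> C n"
    and C_neg: "n < 0 \<Longrightarrow> x \<in> C n \<Longrightarrow> x = 0"
    and d_smul: "a \<in> Zq q \<Longrightarrow> x \<in> C n \<Longrightarrow> d n (csmul a x) = csmul a (d n x)"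
    and h_C: "x \<in> C n \<Longrightarrow> h n x \<in> C (n + 1)"
    and h_diff: "x \<in> C n \<Longrightarrow> y \<in> C n \<Longrightarrow> h n (x - y) = h n x - h n y"
    and h_smul: "a \<in> Zq q \<Longrightarrow> x \<in> C n \<Longrightarrow> h n (csmul a x) = csmul a (h n x)"
    and esum_d: "1 \<le> n \<Longrightarrow> x \<in> C n \<Longrightarrow> esum (d n x) = qnum q (nat n + 1) * esum x"
    and htpy: "x \<in> C n \<Longrightarrow> 0 \<le> n \<Longrightarrow> n \<noteq> 0 \<or> esum x = 0 \<Longrightarrow>
                 d (n + 1) (h n x) = x + csmul q (h (n - 1) (d n x))"
    and cst_C: "0 \<le> n \<Longrightarrow> cst n \<in> C n"
    and esum_cst: "0 \<le> n \<Longrightarrow> esum (cst n) = 1"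
    and d_cst: "1 \<le> n \<Longrightarrow> d n (cst n) = csmul (qnum q (nat n + 1)) (cst (n - 1))"
    and N_prime: "prime N" and N_ge: "3 \<le> N" and q_N: "q ^ N = 1" and q_ne: "q \<noteq> 1"
begin

lemma h_zero: "h n 0 = 0"
  using h_diff[OF M_zero M_zero, of n] by simp

lemma hpow_C: "y \<in> C n \<Longrightarrow> hpow h j n y \<in> C (n + int j)"
  by (induction j) (auto dest: h_C simp: algebra_simps)

lemma dpow_smul: "a \<in> Zq q \<Longrightarrow> x \<in> C n \<Longrightarrow> dpow d k n (csmul a x) = csmul a (dpow d k n x)"
  by (induction k) (auto simp: d_smul dpow_M)

lemma lemA:
  assumes y: "y \<in> C n" "0 \<le> n" "d n y = 0" "n \<noteq> 0 \<or> esum y = 0"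
  shows "d (n + int (Suc j)) (hpow h (Suc j) n y) = csmul (qnum q (Suc j)) (hpow h j n y)"
proof (induction j)
  case 0
  have "d (n + 1) (h n y) = y" using htpy[OF y(1,2,4)] y(3) h_zero by simp
  then show ?case by (simp add: qnum_def)
next
  case (Suc j)
  let ?z = "hpow h (Suc j) n y"
  have z: "?z \<in> C (n + int (Suc j))" by (rule hpow_C[OF y(1)])
  have "d (n + int (Suc j) + 1) (h (n + int (Suc j)) ?z) = ?z + csmul q (h (n + int (Suc j) - 1) (d (n + int (Suc j)) ?z))"
    by (rule htpy[OF z]) (use y(2) in auto)
  also have "h (n + int (Suc j) - 1) (d (n + int (Suc j)) ?z) = h (n + int j) (csmul (qnum q (Suc j)) (hpow h j n y))"
    using Suc by simp
  also have "\<dots> = csmul (qnum q (Suc j)) ?z"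
    by (simp add: h_smul qnum_Zq hpow_C[OF y(1)])
  finally show ?case
    by (simp add: csmul_add_self qnum_Suc[of q "Suc j"] algebra_simps)
qed

lemma lemB:
  assumes y: "y \<in> C n" "0 \<le> n" "d n y = 0" "n \<noteq> 0 \<or> esum y = 0"
  shows "dpow d j (n + int j) (hpow h j n y) = csmul (qfact q j) y"
proof (induction j)
  case 0 then show ?case by (simp add: qfact_def)
next
  case (Suc j)
  have "dpow d (Suc j) (n + int (Suc j)) (hpow h (Suc j) n y)
      = dpow d j (n + int j) (d (n + int (Suc j)) (hpow h (Suc j) n y))"
  proof -
    have idx: "n + int (Suc j) - 1 = n + int j" by simp
    show ?thesis by (subst dpow_Suc') (simp only: idx)
  qed
  also have "\<dots> = dpow d j (n + int j) (csmul (qnum q (Suc j)) (hpow h j n y))"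
    by (simp only: lemA[OF y])
  also have "\<dots> = csmul (qnum q (Suc j)) (csmul (qfact q j) y)"
    by (simp add: dpow_smul qnum_Zq hpow_C[OF y(1)] Suc)
  finally show ?case by (simp add: qfact_def algebra_simps)
qed

lemma qnum_unit': "1 \<le> j \<Longrightarrow> j < N \<Longrightarrow> \<exists>u\<in>Zq q. qnum q j * u = 1"
  using qnum_unit[OF N_prime q_N q_ne] by blast

lemma qfact_unit: "j < N \<Longrightarrow> \<exists>u\<in>Zq q. qfact q j * u = 1"
  unfolding qfact_def by (rule Zq_unit_prod) (auto intro!: qnum_unit')

lemma ker1:
  assumes y: "y \<in> C n" "0 \<le> n" "d n y = 0" "n \<noteq> 0 \<or> esum y = 0"
  shows "y \<in> dpow d (N - 1) (n + int (N - 1)) ` C (n + int (N - 1))"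
proof -
  obtain u where u: "u \<in> Zq q" "qfact q (N - 1) * u = 1"
    using qfact_unit[of "N - 1"] N_ge by auto
  have "dpow d (N - 1) (n + int (N - 1)) (csmul u (hpow h (N - 1) n y)) = y"
    using u by (simp add: dpow_smul hpow_C[OF y(1)] lemB[OF y] algebra_simps)
  moreover have "csmul u (hpow h (N - 1) n y) \<in> C (n + int (N - 1))"
    by (intro C_smul u hpow_C y)
  ultimately show ?thesis by (metis image_eqI)
qed

lemma step:
  assumes m: "1 \<le> m" "m + 1 \<le> N - 1" and n: "1 \<le> n" and x: "x \<in> C n"
    and w: "w \<in> C (n - 1 + int (N - m))" and dx: "d n x = dpow d (N - m) (n - 1 + int (N - m)) w"
  shows "x \<in> dpow d (N - (m + 1)) (n + int (N - (m + 1))) ` C (n + int (N - (m + 1)))"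
proof -
  define k where "k = N - (m + 1)"
  define n' where "n' = n + int k"
  have Nm: "N - m = Suc k" using m unfolding k_def by auto
  have n'eq: "n - 1 + int (N - m) = n'" unfolding n'_def Nm by simp
  have w': "w \<in> C n'" using w n'eq by simp
  have dw: "dpow d k n' w \<in> C n" using dpow_M[OF w', of k] by (simp add: n'_def)
  have "dpow d (Suc k) n' w = d n (dpow d k n' w)" by (simp add: n'_def)
  then have dx': "d n x = d n (dpow d k n' w)" using dx Nm n'eq by simp
  define y where "y = x - dpow d k n' w"
  have yC: "y \<in> C n" unfolding y_def by (intro M_diff x dw)
  have dy: "d n y = 0" unfolding y_def by (simp add: d_diff[OF x dw] dx')
  obtain v where v: "v \<in> C (n + int (N - 1))" "y = dpow d (N - 1) (n + int (N - 1)) v"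
    using ker1[OF yC _ dy] n by auto
  have N1: "N - 1 = k + m" using m unfolding k_def by auto
  have "dpow d (N - 1) (n + int (N - 1)) v = dpow d k (n + int (N - 1) - int m) (dpow d m (n + int (N - 1)) v)"
    unfolding N1 by (rule dpow_add)
  also have "n + int (N - 1) - int m = n'" unfolding n'_def N1 by simp
  finally have yv: "y = dpow d k n' (dpow d m (n + int (N - 1)) v)" using v by simp
  have dv: "dpow d m (n + int (N - 1)) v \<in> C n'"
    using dpow_M[OF v(1), of m] \<open>n + int (N - 1) - int m = n'\<close> by simp
  have "x = y + dpow d k n' w" unfolding y_def by simp
  also have "\<dots> = dpow d k n' (dpow d m (n + int (N - 1)) v + w)"
    unfolding yv by (rule dpow_add'[symmetric, OF dv w'])
  finally have "x = dpow d k n' (dpow d m (n + int (N - 1)) v + w)" .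
  moreover have "dpow d m (n + int (N - 1)) v + w \<in> C n'" by (intro M_add dv w')
  ultimately show ?thesis unfolding k_def[symmetric] n'_def[symmetric] by blast
qed

lemma case_a:
  "\<And>n x. 1 \<le> m \<Longrightarrow> m \<le> N - 1 \<Longrightarrow> int m \<le> n \<Longrightarrow> x \<in> C n \<Longrightarrow> dpow d m n x = 0 \<Longrightarrow>
     x \<in> dpow d (N - m) (n + int (N - m)) ` C (n + int (N - m))"
proof (induction m)
  case 0 then show ?case by simp
next
  case (Suc m n x)
  show ?case
  proof (cases "m = 0")
    case True
    have e: "dpow d (Suc 0) n x = d n x" by simp
    have "d n x = 0" using Suc.prems(5) True e by metis
    from ker1[OF Suc.prems(4) _ this] show ?thesis using Suc.prems True by simp
  next
    case False
    have dx: "d n x \<in> C (n - 1)" by (rule d_M[OF Suc.prems(4)])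
    have "dpow d m (n - 1) (d n x) = 0" using Suc.prems(5) by (simp only: dpow_Suc')
    then obtain w where w: "w \<in> C (n - 1 + int (N - m))" "d n x = dpow d (N - m) (n - 1 + int (N - m)) w"
      using Suc.IH[OF _ _ _ dx] False Suc.prems by force
    show ?thesis using step[OF _ _ _ Suc.prems(4) w] False Suc.prems by simp
  qed
qed

lemma case_c:
  "\<And>x. 1 \<le> m \<Longrightarrow> m \<le> N - 1 \<Longrightarrow> x \<in> C (int m - 1) \<Longrightarrow> esum x = 0 \<Longrightarrow>
     x \<in> dpow d (N - m) (int m - 1 + int (N - m)) ` C (int m - 1 + int (N - m))"
proof (induction m)
  case 0 then show ?case by simp
next
  case (Suc m x)
  show ?case
  proof (cases "m = 0")
    case True
    have "d 0 x = 0" using C_neg[OF _ d_M] Suc.prems True by fastforce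
    then show ?thesis using ker1[of x 0] Suc.prems True by simp
  next
    case False
    have x: "x \<in> C (int m)" using Suc.prems by simp
    have dx: "d (int m) x \<in> C (int m - 1)" by (rule d_M[OF x])
    have "esum (d (int m) x) = 0" using esum_d[OF _ x] False Suc.prems by simp
    then obtain w where w: "w \<in> C (int m - 1 + int (N - m))" "d (int m) x = dpow d (N - m) (int m - 1 + int (N - m)) w"
      using Suc.IH[OF _ _ dx] False Suc.prems by force
    show ?thesis using step[OF _ _ _ x w] False Suc.prems by simp
  qed
qed

lemma dpow_cst:
  assumes "0 \<le> n"
  shows "dpow d k (n + int k) (cst (n + int k)) = csmul (\<Prod>i<k. qnum q (nat n + i + 2)) (cst n)"
proof (induction k)
  case 0 then show ?case by simp
next
  case (Suc k)
  have "dpow d (Suc k) (n + int (Suc k)) (cst (n + int (Suc k)))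
     = dpow d k (n + int k) (d (n + int (Suc k)) (cst (n + int (Suc k))))"
  proof -
    have idx: "n + int (Suc k) - 1 = n + int k" by simp
    show ?thesis by (subst dpow_Suc') (simp only: idx)
  qed
  also have "d (n + int (Suc k)) (cst (n + int (Suc k))) = csmul (qnum q (nat n + k + 2)) (cst (n + int k))"
    using d_cst[of "n + int (Suc k)"] assms by (simp add: nat_add_distrib)
  also have "dpow d k (n + int k) (csmul (qnum q (nat n + k + 2)) (cst (n + int k)))
      = csmul (qnum q (nat n + k + 2)) (csmul (\<Prod>i<k. qnum q (nat n + i + 2)) (cst n))"
    using assms by (simp add: dpow_smul qnum_Zq cst_C Suc)
  finally show ?case by (simp add: algebra_simps)
qed

lemma case_b:
  assumes n: "0 \<le> n" "n + 2 \<le> int m" and m: "m \<le> N - 1" and x: "x \<in> C n"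
  shows "x \<in> dpow d (N - m) (n + int (N - m)) ` C (n + int (N - m))"
proof -
  define m' where "m' = nat n + 1"
  define x' where "x' = x - csmul (esum x) (cst n)"
  have ex: "esum x \<in> Zq q" unfolding esum_def by (intro Zq_sum C_val[OF x])
  have cC: "csmul (esum x) (cst n) \<in> C n" by (intro C_smul ex cst_C n)
  have x'C: "x' \<in> C n" unfolding x'_def by (intro M_diff x cC)
  have "esum x' = esum x - esum (csmul (esum x) (cst n))"
    unfolding x'_def by (rule esum_diff[OF C_fin[OF x] C_fin[OF cC]])
  also have "\<dots> = 0" using esum_csmul[OF C_fin[OF cst_C[OF n(1)]]] esum_cst[OF n(1)] by simp
  finally have ex': "esum x' = 0" .
  have m'n: "int m' - 1 = n" unfolding m'_def using n by simp
  have "x' \<in> dpow d (N - m') (int m' - 1 + int (N - m')) ` C (int m' - 1 + int (N - m'))"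
    by (rule case_c) (use x'C ex' m n m'n in \<open>auto simp: m'_def\<close>)
  then obtain w where w: "w \<in> C (n + int (N - m'))" "x' = dpow d (N - m') (n + int (N - m')) w"
    unfolding m'n by blast
  have NN: "N - m' = (N - m) + (m - m')" using n m unfolding m'_def by auto
  have idx: "n + int (N - m') - int (m - m') = n + int (N - m)" using n m unfolding m'_def by auto
  have "dpow d ((N - m) + (m - m')) (n + int (N - m')) w = dpow d (N - m) (n + int (N - m') - int (m - m')) (dpow d (m - m') (n + int (N - m')) w)"
    by (rule dpow_add)
  then have x'2: "x' = dpow d (N - m) (n + int (N - m)) (dpow d (m - m') (n + int (N - m')) w)"
    using w(2) by (simp only: NN[symmetric] idx)
  have w2: "dpow d (m - m') (n + int (N - m')) w \<in> C (n + int (N - m))"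
    using dpow_M[OF w(1), of "m - m'"] idx by simp
  obtain u where u: "u \<in> Zq q" "(\<Prod>i<N - m. qnum q (nat n + i + 2)) * u = 1"
    using Zq_unit_prod[of "{..<N - m}" q "\<lambda>i. qnum q (nat n + i + 2)"] qnum_unit' n m by force
  have "dpow d (N - m) (n + int (N - m)) (csmul (esum x * u) (cst (n + int (N - m))))
     = csmul (esum x * u) (dpow d (N - m) (n + int (N - m)) (cst (n + int (N - m))))"
    using u n ex by (intro dpow_smul Zq_mult cst_C) auto
  also have "\<dots> = csmul (esum x * u) (csmul (\<Prod>i<N - m. qnum q (nat n + i + 2)) (cst n))"
    by (simp only: dpow_cst[OF n(1)])
  also have "\<dots> = csmul (esum x) (cst n)"
    using u(2) by (simp only: csmul_csmul) (simp add: mult.assoc mult.commute[of u])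
  finally have c2: "csmul (esum x) (cst n) = dpow d (N - m) (n + int (N - m)) (csmul (esum x * u) (cst (n + int (N - m))))" ..
  have c2C: "csmul (esum x * u) (cst (n + int (N - m))) \<in> C (n + int (N - m))"
    using n u ex by (intro C_smul Zq_mult cst_C) auto
  have "x = x' + csmul (esum x) (cst n)" unfolding x'_def by simp
  also have "\<dots> = dpow d (N - m) (n + int (N - m)) (dpow d (m - m') (n + int (N - m')) w + csmul (esum x * u) (cst (n + int (N - m))))"
    unfolding x'2 c2 by (rule dpow_add'[symmetric, OF w2 c2C])
  finally show ?thesis using M_add[OF w2 c2C] by blast
qed

end


lemma zq_grp: "grp_cx (zq_cx q N) (zq_d q N)"
proof
  fix n :: int and x y
  show "0 \<in> zq_cx q N n" by (simp add: zq_cx_def Zq_0)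
  show "x \<in> zq_cx q N n \<Longrightarrow> y \<in> zq_cx q N n \<Longrightarrow> x - y \<in> zq_cx q N n"
    by (auto simp: zq_cx_def Zq_diff)
  show "x \<in> zq_cx q N n \<Longrightarrow> zq_d q N n x \<in> zq_cx q N (n - 1)"
    by (auto simp: zq_cx_def zq_d_def Zq_mult qnum_Zq Zq_0)
  show "x \<in> zq_cx q N n \<Longrightarrow> y \<in> zq_cx q N n \<Longrightarrow> zq_d q N n (x - y) = zq_d q N n x - zq_d q N n y"
    by (auto simp: zq_d_def algebra_simps)
qed

interpretation zq: grp_cx "zq_cx q N" "zq_d q N" by (rule zq_grp)

definition cd :: "complex \<Rightarrow> nat \<Rightarrow> int \<Rightarrow> complex" where
  "cd q N j = (if 1 \<le> j \<and> j \<le> int N - 2 then qnum q (nat j + 1) else 0)"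

lemma dpow_zq: "dpow (zq_d q N) k n u = (\<Prod>i<k. cd q N (n - int i)) * u"
  by (induction k) (simp_all add: zq_d_def cd_def algebra_simps)

definition etag :: "nat \<Rightarrow> int \<Rightarrow> ('s \<Rightarrow> complex) \<Rightarrow> complex" where
  "etag N n x = (if 0 \<le> n \<and> n \<le> int N - 2 then esum x else 0)"

lemma eta_etag1: "eta N n x = etag N n x"
  by (simp add: eta_def etag_def esum_def)

lemma eta_etag: "eta N = etag N"
  by (intro ext) (rule eta_etag1)

context qcx
begin

lemma cd_unit: "1 \<le> j \<Longrightarrow> j \<le> int N - 2 \<Longrightarrow> \<exists>u\<in>Zq q. cd q N j * u = 1"
  unfolding cd_def using qnum_unit'[of "nat j + 1"] by auto

lemma esum_Zq: "x \<in> C n \<Longrightarrow> esum x \<in> Zq q"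
  unfolding esum_def by (intro Zq_sum C_val)

lemma etag_C: "x \<in> C n \<Longrightarrow> etag N n x \<in> zq_cx q N n"
  by (auto simp: etag_def zq_cx_def esum_Zq)

lemma etag_diff: "x \<in> C n \<Longrightarrow> y \<in> C n \<Longrightarrow> etag N n (x - y) = etag N n x - etag N n y"
  by (simp add: etag_def esum_diff C_fin)

lemma etag_zero [simp]: "etag N n 0 = 0" by (simp add: etag_def)

lemma dC_neg: "n \<le> 0 \<Longrightarrow> x \<in> C n \<Longrightarrow> d n x = 0"
  using C_neg[OF _ d_M] by auto

lemma etag_d: assumes x: "x \<in> C n" shows "etag N (n - 1) (d n x) = zq_d q N n (etag N n x)"
proof -
  consider "n \<le> 0" | "1 \<le> n \<and> n \<le> int N - 2" | "n = int N - 1" | "int N \<le> n" by linarith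
  then show ?thesis
  proof cases
    case 1 then show ?thesis using dC_neg[OF 1 x] by (simp add: zq_d_def)
  next
    case 2 then show ?thesis using esum_d[OF _ x] by (simp add: etag_def zq_d_def)
  next
    case 3
    have "nat n + 1 = N" using 3 N_ge by auto
    then show ?thesis using esum_d[OF _ x] 3 N_ge qnum_N[OF q_N q_ne]
      by (simp add: etag_def zq_d_def)
  next
    case 4 then show ?thesis by (simp add: etag_def zq_d_def)
  qed
qed

lemma etag_dpow: "x \<in> C n \<Longrightarrow> etag N (n - int k) (dpow d k n x) = dpow (zq_d q N) k n (etag N n x)"
proof (induction k)
  case (Suc k)
  have "etag N (n - int (Suc k)) (dpow d (Suc k) n x) = etag N (n - int k - 1) (d (n - int k) (dpow d k n x))"
    by (simp add: algebra_simps)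
  also have "\<dots> = zq_d q N (n - int k) (etag N (n - int k) (dpow d k n x))"
    by (rule etag_d[OF dpow_M[OF Suc.prems]])
  finally show ?case using Suc by simp
qed simp

lemma ker_map: "x \<in> amp_ker C d m n \<Longrightarrow> etag N n x \<in> amp_ker (zq_cx q N) (zq_d q N) m n"
  unfolding amp_ker_def using etag_C etag_dpow[of x n m] by auto

lemma im_map: "x \<in> amp_im C d N m n \<Longrightarrow> etag N n x \<in> amp_im (zq_cx q N) (zq_d q N) N m n"
proof -
  assume "x \<in> amp_im C d N m n"
  then obtain z where z: "z \<in> C (n + int (N - m))" "x = dpow d (N - m) (n + int (N - m)) z"
    unfolding amp_im_def by auto
  have "etag N n x = dpow (zq_d q N) (N - m) (n + int (N - m)) (etag N (n + int (N - m)) z)"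
    using etag_dpow[OF z(1), of "N - m"] z(2) by simp
  then show ?thesis unfolding amp_im_def using etag_C[OF z(1)] by blast
qed

lemma rel_map: "(x, y) \<in> amp_rel C d N m n \<Longrightarrow> (etag N n x, etag N n y) \<in> amp_rel (zq_cx q N) (zq_d q N) N m n"
  unfolding amp_rel_def using ker_map im_map etag_diff by (auto simp: amp_ker_def) (metis etag_diff)

lemma inj_main:
  assumes m: "1 \<le> m" "m \<le> N - 1" and x: "x \<in> amp_ker C d m n"
    and e: "etag N n x \<in> amp_im (zq_cx q N) (zq_d q N) N m n"
  shows "x \<in> amp_im C d N m n"
proof -
  have xC: "x \<in> C n" and dx: "dpow d m n x = 0" using x by (auto simp: amp_ker_def)
  consider "n < 0" | "int m \<le> n" | "n = int m - 1" | "0 \<le> n \<and> n + 2 \<le> int m" by linarith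
  then show ?thesis
  proof cases
    case 1 then show ?thesis using C_neg[OF 1 xC] im_zero by simp
  next
    case 2 then show ?thesis using case_a[OF m 2 xC dx] by (simp add: amp_im_def)
  next
    case 3
    have "n + int (N - m) = int N - 1" using 3 m by auto
    then have "amp_im (zq_cx q N) (zq_d q N) N m n = {0}" using N_ge
      by (simp add: amp_im_def zq_cx_def zq.dpow_zero)
    then have "etag N n x = 0" using e by simp
    then have "esum x = 0" using 3 m by (simp add: etag_def split: if_splits)
    then show ?thesis using case_c[OF m, of x] xC 3 by (simp add: amp_im_def)
  next
    case 4 then show ?thesis using case_b[of n m x] m xC by (simp add: amp_im_def)
  qed
qed

lemma zq_im:
  assumes m: "1 \<le> m" "m \<le> N - 1" and u: "u \<in> amp_ker (zq_cx q N) (zq_d q N) m n" and nm: "n \<noteq> int m - 1"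
  shows "u \<in> amp_im (zq_cx q N) (zq_d q N) N m n"
proof -
  have uC: "u \<in> zq_cx q N n" and du: "(\<Prod>i<m. cd q N (n - int i)) * u = 0"
    using u by (auto simp: amp_ker_def dpow_zq)
  consider "\<not> (0 \<le> n \<and> n \<le> int N - 2)" | "0 \<le> n \<and> n \<le> int N - 2 \<and> int m \<le> n"
    | "0 \<le> n \<and> n + 2 \<le> int m" using nm m by linarith
  then show ?thesis
  proof cases
    case 1 then show ?thesis using uC zq.im_zero[of q N N m n] by (simp add: zq_cx_def split: if_splits)
  next
    case 2
    obtain w where "w \<in> Zq q" "(\<Prod>i<m. cd q N (n - int i)) * w = 1"
      using Zq_unit_prod[of "{..<m}" q "\<lambda>i. cd q N (n - int i)"] cd_unit 2 by force
    then have "u = 0" using du by (metis mult_zero_left mult.commute mult.left_commute mult_1)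
    then show ?thesis using zq.im_zero by simp
  next
    case 3
    obtain w where w: "w \<in> Zq q" "(\<Prod>i<N - m. cd q N (n + int (N - m) - int i)) * w = 1"
      using Zq_unit_prod[of "{..<N - m}" q "\<lambda>i. cd q N (n + int (N - m) - int i)"] cd_unit 3 m by force
    have uZ: "u \<in> Zq q" using uC 3 m by (simp add: zq_cx_def split: if_splits)
    have "dpow (zq_d q N) (N - m) (n + int (N - m)) (w * u) = u"
      using w by (simp add: dpow_zq mult.assoc[symmetric])
    moreover have "w * u \<in> zq_cx q N (n + int (N - m))" using 3 m w uZ by (simp add: zq_cx_def Zq_mult)
    ultimately show ?thesis unfolding amp_im_def by (metis image_eqI)
  qed
qed

lemma surj_main:
  assumes m: "1 \<le> m" "m \<le> N - 1" and u: "u \<in> amp_ker (zq_cx q N) (zq_d q N) m n"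
  shows "\<exists>x\<in>amp_ker C d m n. (etag N n x, u) \<in> amp_rel (zq_cx q N) (zq_d q N) N m n"
proof (cases "n = int m - 1")
  case True
  have n: "0 \<le> n" "n \<le> int N - 2" using True m by auto
  have uZ: "u \<in> Zq q" using u n by (simp add: amp_ker_def zq_cx_def)
  define x where "x = csmul u (cst n)"
  have xC: "x \<in> C n" unfolding x_def by (intro C_smul uZ cst_C n)
  have "dpow d m n x = 0" using C_neg[OF _ dpow_M[OF xC, of m]] True by simp
  then have xK: "x \<in> amp_ker C d m n" using xC by (simp add: amp_ker_def)
  have "etag N n x = u" using n esum_csmul[OF C_fin[OF cst_C[OF n(1)]]] esum_cst[OF n(1)]
    by (simp add: etag_def x_def)
  moreover have "(u, u) \<in> amp_rel (zq_cx q N) (zq_d q N) N m n"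
    using u by (simp add: amp_rel_def zq.im_zero)
  ultimately show ?thesis using xK by auto
next
  case False
  have "- u \<in> amp_im (zq_cx q N) (zq_d q N) N m n" by (rule zq.im_uminus[OF zq_im[OF m u False]])
  then have "(0, u) \<in> amp_rel (zq_cx q N) (zq_d q N) N m n"
    using u zq.ker_zero by (simp add: amp_rel_def)
  then show ?thesis using ker_zero by (metis etag_zero)
qed

lemma F_class:
  assumes x: "x \<in> amp_ker C d m n"
  shows "amp_induced (etag N) (zq_cx q N) (zq_d q N) N m n (amp_rel C d N m n `` {x})
       = amp_rel (zq_cx q N) (zq_d q N) N m n `` {etag N n x}"
proof -
  let ?RT = "amp_rel (zq_cx q N) (zq_d q N) N m n" and ?R = "amp_rel C d N m n"
  have xx: "(x, x) \<in> ?R" using x by (simp add: amp_rel_def im_zero)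
  have 1: "z \<in> ?RT `` {etag N n x}" if zin: "z \<in> ?RT `` (etag N n ` (?R `` {x}))" for z
  proof -
    obtain y where y: "(x, y) \<in> ?R" "(etag N n y, z) \<in> ?RT" using zin by blast
    have "(etag N n x, etag N n y) \<in> ?RT" by (rule rel_map[OF y(1)])
    with y(2) show "z \<in> ?RT `` {etag N n x}"
      using zq.equiv_rel by (meson Image_singleton_iff equiv_def transD)
  qed
  have 2: "?RT `` {etag N n x} \<subseteq> ?RT `` (etag N n ` (?R `` {x}))" using xx by blast
  show ?thesis unfolding amp_induced_def using 1 2 by blast
qed

theorem main_bij:
  assumes m: "1 \<le> m" "m \<le> N - 1"
  shows "bij_betw (amp_induced (etag N) (zq_cx q N) (zq_d q N) N m n)
       (amp_hom C d N m n) (amp_hom (zq_cx q N) (zq_d q N) N m n)"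
proof -
  let ?K = "amp_ker C d m n" and ?R = "amp_rel C d N m n"
  let ?KT = "amp_ker (zq_cx q N) (zq_d q N) m n" and ?RT = "amp_rel (zq_cx q N) (zq_d q N) N m n"
  let ?F = "amp_induced (etag N) (zq_cx q N) (zq_d q N) N m n"
  have eq: "equiv ?K ?R" by (rule equiv_rel)
  have eqT: "equiv ?KT ?RT" by (rule zq.equiv_rel)
  have inj: "inj_on ?F (?K // ?R)"
  proof (rule inj_onI)
    fix A B assume A: "A \<in> ?K // ?R" and B: "B \<in> ?K // ?R" and FAB: "?F A = ?F B"
    obtain x where x: "x \<in> ?K" "A = ?R `` {x}" using A by (auto elim: quotientE)
    obtain y where y: "y \<in> ?K" "B = ?R `` {y}" using B by (auto elim: quotientE)
    have "?RT `` {etag N n x} = ?RT `` {etag N n y}" using FAB x y F_class by simp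
    then have "(etag N n x, etag N n y) \<in> ?RT"
      using eq_equiv_class_iff[OF eqT] ker_map x y by blast
    then have "etag N n x - etag N n y \<in> amp_im (zq_cx q N) (zq_d q N) N m n"
      by (simp add: amp_rel_def)
    then have "etag N n (x - y) \<in> amp_im (zq_cx q N) (zq_d q N) N m n"
      using etag_diff x y by (simp add: amp_ker_def)
    then have "x - y \<in> amp_im C d N m n" using inj_main[OF m ker_diff[OF x(1) y(1)]] by simp
    then have "(x, y) \<in> ?R" using x y by (simp add: amp_rel_def)
    then show "A = B" using x y equiv_class_eq[OF eq] by simp
  qed
  have img: "?F ` (?K // ?R) = ?KT // ?RT"
  proof
    show "?F ` (?K // ?R) \<subseteq> ?KT // ?RT"
    proof
      fix Z assume "Z \<in> ?F ` (?K // ?R)"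
      then obtain x where x: "x \<in> ?K" "Z = ?F (?R `` {x})" by (auto elim: quotientE)
      then show "Z \<in> ?KT // ?RT" using F_class ker_map by (simp add: quotientI)
    qed
    show "?KT // ?RT \<subseteq> ?F ` (?K // ?R)"
    proof
      fix B assume "B \<in> ?KT // ?RT"
      then obtain u where u: "u \<in> ?KT" "B = ?RT `` {u}" by (auto elim: quotientE)
      obtain x where x: "x \<in> ?K" "(etag N n x, u) \<in> ?RT" using surj_main[OF m u(1)] by blast
      have "B = ?RT `` {etag N n x}" using u x equiv_class_eq[OF eqT] by metis
      also have "\<dots> = ?F (?R `` {x})" using F_class[OF x(1)] by simp
      finally show "B \<in> ?F ` (?K // ?R)" using x(1) by (auto intro: quotientI)
    qed
  qed
  show ?thesis unfolding bij_betw_def amp_hom_def using inj img by blast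
qed

end


lemma eventually_atin_topspace: "eventually (\<lambda>y. y \<in> topspace T) (atin T x)"
  unfolding eventually_atin by (metis Diff_iff openin_topspace)

lemma atin_le_within:
  assumes "openin T U" "x \<in> U"
  shows "atin T x \<le> atin_within T x U"
proof (rule filter_leI)
  fix P assume "eventually P (atin_within T x U)"
  then have "x \<notin> topspace T \<or> (\<exists>V. openin T V \<and> x \<in> V \<and> (\<forall>y\<in>V. y \<in> U \<and> y \<noteq> x \<longrightarrow> P y))"
    by (simp add: eventually_atin_within)
  then show "eventually P (atin T x)"
  proof
    assume "x \<notin> topspace T" then show ?thesis by (simp add: eventually_atin)
  next
    assume "\<exists>V. openin T V \<and> x \<in> V \<and> (\<forall>y\<in>V. y \<in> U \<and> y \<noteq> x \<longrightarrow> P y)"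
    then obtain V where V: "openin T V" "x \<in> V" "\<forall>y\<in>V. y \<in> U \<and> y \<noteq> x \<longrightarrow> P y" by blast
    have "openin T (V \<inter> U)" using V(1) assms(1) by auto
    moreover have "\<forall>y\<in>(V \<inter> U) - {x}. P y" using V(3) by auto
    ultimately show ?thesis unfolding eventually_atin using V(2) assms(2) by blast
  qed
qed

lemma cont_scale:
  fixes w :: "'a \<Rightarrow> 'b::real_normed_vector"
  assumes a: "continuous_map T euclideanreal a"
    and B: "\<And>x. x \<in> topspace T \<Longrightarrow> norm (w x) \<le> B"
    and w: "continuous_map (subtopology T {x \<in> topspace T. a x \<noteq> 0}) euclidean w"
  shows "continuous_map T euclidean (\<lambda>x. a x *\<^sub>R w x)"
  unfolding continuous_map_atin limitin_canonical_iff
proof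
  fix x assume x: "x \<in> topspace T"
  have alim: "(a \<longlongrightarrow> a x) (atin T x)"
    using a x unfolding continuous_map_atin limitin_canonical_iff by blast
  show "((\<lambda>x. a x *\<^sub>R w x) \<longlongrightarrow> a x *\<^sub>R w x) (atin T x)"
  proof (cases "a x = 0")
    case True
    have "\<forall>\<^sub>F y in atin T x. norm (a y *\<^sub>R w y) \<le> \<bar>a y\<bar> * B"
      using eventually_atin_topspace[of T x]
      by eventually_elim (auto intro: mult_left_mono B)
    moreover have "((\<lambda>y. \<bar>a y\<bar> * B) \<longlongrightarrow> 0) (atin T x)"
      using alim True by (intro tendsto_mult_left_zero tendsto_rabs_zero) simp
    ultimately have "((\<lambda>y. a y *\<^sub>R w y) \<longlongrightarrow> 0) (atin T x)"
      by (rule Lim_null_comparison)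
    then show ?thesis using True by simp
  next
    case False
    let ?U = "{x \<in> topspace T. a x \<noteq> 0}"
    have "openin T {x \<in> topspace T. a x \<in> - {0}}"
      by (rule openin_continuous_map_preimage[OF a]) (simp add: open_Compl)
    then have U: "openin T ?U" by simp
    have "limitin euclidean w (w x) (atin_within T x ?U)"
      by (rule limit_continuous_map_within[OF w]) (use False x in auto)
    then have "(w \<longlongrightarrow> w x) (atin_within T x ?U)" by (simp add: limitin_canonical_iff)
    moreover have xU: "x \<in> ?U" using False x by auto
    ultimately have "(w \<longlongrightarrow> w x) (atin T x)"
      using tendsto_mono[OF atin_le_within[OF U xU]] by blast
    then show ?thesis using alim by (intro tendsto_scaleR)
  qed
qed

definition qcone :: "nat \<Rightarrow> 'b::real_vector \<Rightarrow> ((nat \<Rightarrow> real) \<Rightarrow> 'b) \<Rightarrow> (nat \<Rightarrow> real) \<Rightarrow> 'b" where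
  "qcone p x0 \<sigma> = restrict (\<lambda>t. x0 + (1 - t 0) *\<^sub>R (if t 0 = 1 then 0 else \<sigma> (\<lambda>i. t (Suc i) / (1 - t 0)) - x0))
      (standard_simplex (Suc p))"

definition cst_s :: "nat \<Rightarrow> 'b \<Rightarrow> (nat \<Rightarrow> real) \<Rightarrow> 'b" where
  "cst_s p x0 = restrict (\<lambda>_. x0) (standard_simplex p)"

lemma g_in:
  assumes t: "t \<in> standard_simplex (Suc p)" and t0: "t 0 \<noteq> 1"
  shows "(\<lambda>i. t (Suc i) / (1 - t 0)) \<in> standard_simplex p"
proof -
  have t01: "\<And>i. 0 \<le> t i \<and> t i \<le> 1" and tz: "\<And>i. i > Suc p \<Longrightarrow> t i = 0"
    and ts: "(\<Sum>i\<le>Suc p. t i) = 1" using t by (auto simp: standard_simplex_def)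
  have pos: "1 - t 0 > 0" using t01[of 0] t0 by auto
  have ssum: "(\<Sum>i\<le>p. t (Suc i)) = 1 - t 0"
    using ts unfolding sum.atMost_Suc_shift by simp
  have le: "t (Suc i) \<le> 1 - t 0" if "i \<le> p" for i
  proof -
    have "t (Suc i) \<le> (\<Sum>i\<le>p. t (Suc i))"
      by (rule member_le_sum) (use that t01 in auto)
    then show ?thesis using ssum by simp
  qed
  show ?thesis unfolding standard_simplex_def
  proof (intro CollectI conjI allI impI)
    fix i
    show "0 \<le> t (Suc i) / (1 - t 0)" using t01 pos by simp
    show "t (Suc i) / (1 - t 0) \<le> 1"
    proof (cases "i \<le> p")
      case True then show ?thesis using le[OF True] pos by simp
    next
      case False then show ?thesis using tz[of "Suc i"] pos by simp
    qed
  next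
    fix i assume "p < i" then show "t (Suc i) / (1 - t 0) = 0" using tz[of "Suc i"] by simp
  next
    show "(\<Sum>i\<le>p. t (Suc i) / (1 - t 0)) = 1" using ssum pos by (simp flip: sum_divide_distrib)
  qed
qed

lemma cont_proj: "continuous_map (subtopology (powertop_real UNIV) A) euclideanreal (\<lambda>t. t k)"
  by (rule continuous_map_from_subtopology) (rule continuous_map_product_projection, simp)

lemma qcone_simplex:
  fixes x0 :: "'b::real_normed_vector"
  assumes \<sigma>: "singular_simplex p (subtopology euclidean S) \<sigma>" and x0: "x0 \<in> S" and S: "convex S"
  shows "singular_simplex (Suc p) (subtopology euclidean S) (qcone p x0 \<sigma>)"
proof -
  let ?P = "powertop_real UNIV"
  let ?D = "standard_simplex (Suc p)"
  let ?T = "subtopology ?P ?D"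
  define W where "W t = (if t 0 = 1 then 0 else \<sigma> (\<lambda>i. t (Suc i) / (1 - t 0)) - x0)" for t
  define g where "g t = (\<lambda>i. t (Suc i) / (1 - t 0))" for t :: "nat \<Rightarrow> real"
  have \<sigma>e: "singular_simplex p euclidean \<sigma>" and \<sigma>S: "\<sigma> ` standard_simplex p \<subseteq> S"
    using \<sigma> by (auto simp: singular_simplex_subtopology)
  have \<sigma>c: "continuous_map (subtopology ?P (standard_simplex p)) euclidean \<sigma>"
    using \<sigma>e by (simp add: singular_simplex_def)
  have "compactin euclidean (\<sigma> ` standard_simplex p)"
    by (rule image_compactin[OF _ \<sigma>c]) (simp add: compactin_subtopology compactin_standard_simplex)
  then have "bounded (\<sigma> ` standard_simplex p)" by (simp add: compact_imp_bounded)
  then obtain B where B: "\<And>y. y \<in> standard_simplex p \<Longrightarrow> norm (\<sigma> y) \<le> B" by (auto simp: bounded_iff)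
  have WB: "norm (W t) \<le> B + norm x0" if "t \<in> topspace ?T" for t
  proof (cases "t 0 = 1")
    case False
    have "g t \<in> standard_simplex p" unfolding g_def by (rule g_in) (use that False in auto)
    then have "norm (\<sigma> (g t)) \<le> B" by (rule B)
    then show ?thesis using False norm_triangle_ineq4[of "\<sigma> (g t)" x0] by (simp add: W_def g_def)
  next
    case True
    have "norm (\<sigma> (\<lambda>j. if j = 0 then 1 else 0)) \<le> B" by (rule B) simp
    then have "0 \<le> B" using norm_ge_zero[of "\<sigma> (\<lambda>j. if j = 0 then 1 else 0)"] by linarith
    then show ?thesis using True by (simp add: W_def)
  qed
  have a: "continuous_map ?T euclideanreal (\<lambda>t. 1 - t 0)"
    by (intro continuous_map_diff continuous_map_const[THEN iffD2] cont_proj) simp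
  let ?U = "{t \<in> topspace ?T. 1 - t 0 \<noteq> 0}"
  have gc: "continuous_map (subtopology ?T ?U) (subtopology ?P (standard_simplex p)) g"
  proof (rule continuous_map_into_subtopology)
    show "continuous_map (subtopology ?T ?U) ?P g"
      unfolding continuous_map_componentwise_UNIV g_def
    proof
      fix k
      have "continuous_map (subtopology ?P (?D \<inter> ?U)) euclideanreal (\<lambda>t. t (Suc k) / (1 - t 0))"
        by (rule continuous_map_real_divide) (auto intro!: cont_proj continuous_map_diff)
      then show "continuous_map (subtopology ?T ?U) euclideanreal (\<lambda>x. x (Suc k) / (1 - x 0))"
        by (simp add: subtopology_subtopology)
    qed
    show "g \<in> topspace (subtopology ?T ?U) \<rightarrow> standard_simplex p"
      unfolding g_def by (auto intro!: g_in)
  qed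
  have Wc: "continuous_map (subtopology ?T ?U) euclidean W"
  proof -
    have "continuous_map (subtopology ?T ?U) euclidean (\<lambda>t. (\<sigma> \<circ> g) t - x0)"
      by (intro continuous_map_diff continuous_map_compose[OF gc \<sigma>c]) simp
    then show ?thesis by (rule continuous_map_eq) (auto simp: W_def g_def)
  qed
  have Fc: "continuous_map ?T euclidean (\<lambda>t. x0 + (1 - t 0) *\<^sub>R W t)"
    by (intro continuous_map_add continuous_map_const[THEN iffD2] cont_scale[OF a WB Wc]) simp_all
  have cont: "continuous_map ?T euclidean (qcone p x0 \<sigma>)"
    unfolding qcone_def using Fc by (subst restrict_continuous_map) (auto simp: W_def)
  have img: "qcone p x0 \<sigma> ` ?D \<subseteq> S"
  proof
    fix y assume "y \<in> qcone p x0 \<sigma> ` ?D"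
    then obtain t where t: "t \<in> ?D" "y = qcone p x0 \<sigma> t" by auto
    show "y \<in> S"
    proof (cases "t 0 = 1")
      case True then show ?thesis using t x0 by (simp add: qcone_def)
    next
      case False
      have t01: "0 \<le> t 0" "t 0 \<le> 1" using t(1) by (auto simp: standard_simplex_def)
      have "\<sigma> (g t) \<in> S" using \<sigma>S g_in[OF t(1) False] by (auto simp: g_def)
      then have "t 0 *\<^sub>R x0 + (1 - t 0) *\<^sub>R \<sigma> (g t) \<in> S"
        using S x0 t01 by (auto simp: convex_def)
      moreover have "y = t 0 *\<^sub>R x0 + (1 - t 0) *\<^sub>R \<sigma> (g t)"
        using t False by (simp add: qcone_def g_def algebra_simps)
      ultimately show ?thesis by simp
    qed
  qed
  have "continuous_map ?T (subtopology euclidean S) (qcone p x0 \<sigma>)"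
    by (rule continuous_map_into_subtopology[OF cont]) (use img in auto)
  then show ?thesis
    unfolding singular_simplex_def by (auto simp: qcone_def)
qed

lemma cst_simplex:
  assumes "x0 \<in> S"
  shows "singular_simplex p (subtopology euclidean S) (cst_s p x0)"
proof -
  have "continuous_map (subtopology (powertop_real UNIV) (standard_simplex p)) euclidean (cst_s p x0)"
    unfolding cst_s_def by (subst restrict_continuous_map) auto
  then show ?thesis using assms
    unfolding singular_simplex_subtopology singular_simplex_def by (auto simp: cst_s_def)
qed

lemma face_cst: "1 \<le> p \<Longrightarrow> k \<le> p \<Longrightarrow> singular_face p k (cst_s p x0) = cst_s (p - 1) x0"
  unfolding singular_face_def cst_s_def
  by (auto simp: fun_eq_iff simplical_face_in_standard_simplex)

lemma face0_qcone:
  assumes "\<sigma> \<in> extensional (standard_simplex p)"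
  shows "singular_face (Suc p) 0 (qcone p x0 \<sigma>) = \<sigma>"
proof
  fix t
  show "singular_face (Suc p) 0 (qcone p x0 \<sigma>) t = \<sigma> t"
  proof (cases "t \<in> standard_simplex p")
    case True
    have "simplical_face 0 t \<in> standard_simplex (Suc p)"
      using simplical_face_in_standard_simplex[of "Suc p" 0 t] True by simp
    moreover have "(\<lambda>i. simplical_face 0 t (Suc i)) = t" by (simp add: simplical_face_def fun_eq_iff)
    ultimately show ?thesis using True by (simp add: singular_face_def qcone_def simplical_face_def)
  next
    case False then show ?thesis using assms by (simp add: singular_face_def extensional_def)
  qed
qed

lemma faceS_qcone:
  assumes p: "1 \<le> p" and j: "j \<le> p"
  shows "singular_face (Suc p) (Suc j) (qcone p x0 \<sigma>) = qcone (p - 1) x0 (singular_face p j \<sigma>)"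
proof
  fix t
  show "singular_face (Suc p) (Suc j) (qcone p x0 \<sigma>) t = qcone (p - 1) x0 (singular_face p j \<sigma>) t"
  proof (cases "t \<in> standard_simplex p")
    case True
    have sp: "Suc (p - 1) = p" using p by simp
    have sf: "simplical_face (Suc j) t \<in> standard_simplex (Suc p)"
      using simplical_face_in_standard_simplex[of "Suc p" "Suc j" t] True j by simp
    have s0: "simplical_face (Suc j) t 0 = t 0" by (simp add: simplical_face_def)
    show ?thesis
    proof (cases "t 0 = 1")
      case True': True
      then show ?thesis using True sf s0 sp by (simp add: singular_face_def qcone_def)
    next
      case False
      have gin: "(\<lambda>i. t (Suc i) / (1 - t 0)) \<in> standard_simplex (p - 1)"
        using g_in[of t "p - 1"] True False sp by simp
      have eq: "(\<lambda>i. simplical_face (Suc j) t (Suc i) / (1 - t 0)) = simplical_face j (\<lambda>i. t (Suc i) / (1 - t 0))"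
        by (auto simp: simplical_face_def fun_eq_iff)
      show ?thesis using True sf s0 sp False gin
        by (simp add: singular_face_def qcone_def eq)
    qed
  next
    case False
    then show ?thesis using p by (simp add: singular_face_def qcone_def)
  qed
qed

lemma face1_qcone0: "singular_face 1 1 (qcone 0 x0 \<sigma>) = cst_s 0 x0"
proof
  fix t
  show "singular_face 1 1 (qcone 0 x0 \<sigma>) t = cst_s 0 x0 t"
  proof (cases "t \<in> standard_simplex 0")
    case True
    then have t: "t = (\<lambda>j. if j = 0 then 1 else 0)" by (simp add: standard_simplex_0)
    have sf: "simplical_face 1 t \<in> standard_simplex 1"
      using simplical_face_in_standard_simplex[of 1 1 t] True by simp
    have "simplical_face 1 t 0 = 1" using t by (simp add: simplical_face_def)
    then show ?thesis using True sf by (simp add: singular_face_def qcone_def cst_s_def)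
  next
    case False then show ?thesis by (simp add: singular_face_def cst_s_def)
  qed
qed


definition lin :: "('s \<Rightarrow> 't \<Rightarrow> complex) \<Rightarrow> ('s \<Rightarrow> complex) \<Rightarrow> 't \<Rightarrow> complex" where
  "lin F c = (\<lambda>\<tau>. \<Sum>\<sigma>\<in>{\<sigma>. c \<sigma> \<noteq> 0}. c \<sigma> * F \<sigma> \<tau>)"

definition delta :: "'s \<Rightarrow> 's \<Rightarrow> complex" where
  "delta s = (\<lambda>\<sigma>. if s = \<sigma> then 1 else 0)"

lemma lin_superset: "finite S \<Longrightarrow> {\<sigma>. c \<sigma> \<noteq> 0} \<subseteq> S \<Longrightarrow> lin F c \<tau> = (\<Sum>\<sigma>\<in>S. c \<sigma> * F \<sigma> \<tau>)"
  unfolding lin_def by (rule sum.mono_neutral_left) auto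

lemma lin_diff:
  assumes "finite {\<sigma>. x \<sigma> \<noteq> 0}" "finite {\<sigma>. y \<sigma> \<noteq> 0}"
  shows "lin F (x - y) = lin F x - lin F y"
proof
  fix \<tau>
  let ?S = "{\<sigma>. x \<sigma> \<noteq> 0} \<union> {\<sigma>. y \<sigma> \<noteq> 0}"
  have f: "finite ?S" using assms by auto
  have "lin F (x - y) \<tau> = (\<Sum>\<sigma>\<in>?S. (x - y) \<sigma> * F \<sigma> \<tau>)" by (rule lin_superset[OF f]) auto
  also have "\<dots> = (\<Sum>\<sigma>\<in>?S. x \<sigma> * F \<sigma> \<tau>) - (\<Sum>\<sigma>\<in>?S. y \<sigma> * F \<sigma> \<tau>)"
    by (simp add: sum_subtractf left_diff_distrib)
  also have "\<dots> = lin F x \<tau> - lin F y \<tau>"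
  proof -
    have "lin F x \<tau> = (\<Sum>\<sigma>\<in>?S. x \<sigma> * F \<sigma> \<tau>)" by (rule lin_superset[OF f]) auto
    moreover have "lin F y \<tau> = (\<Sum>\<sigma>\<in>?S. y \<sigma> * F \<sigma> \<tau>)" by (rule lin_superset[OF f]) auto
    ultimately show ?thesis by simp
  qed
  finally show "lin F (x - y) \<tau> = (lin F x - lin F y) \<tau>" by simp
qed

lemma lin_csmul:
  assumes "finite {\<sigma>. x \<sigma> \<noteq> 0}"
  shows "lin F (csmul a x) = csmul a (lin F x)"
proof
  fix \<tau>
  have "lin F (csmul a x) \<tau> = (\<Sum>\<sigma>\<in>{\<sigma>. x \<sigma> \<noteq> 0}. csmul a x \<sigma> * F \<sigma> \<tau>)"
    by (rule lin_superset[OF assms]) (auto simp: csmul_def)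
  then show "lin F (csmul a x) \<tau> = csmul a (lin F x) \<tau>"
    by (simp add: csmul_def lin_def sum_distrib_left mult.assoc)
qed

lemma lin_delta: "lin F (delta s) = F s"
proof
  fix \<tau>
  have "lin F (delta s) \<tau> = (\<Sum>\<sigma>\<in>{s}. delta s \<sigma> * F \<sigma> \<tau>)"
    by (rule lin_superset) (auto simp: delta_def)
  then show "lin F (delta s) \<tau> = F s \<tau>" by (simp add: delta_def)
qed

lemma lin_id:
  assumes "finite {\<sigma>. c \<sigma> \<noteq> 0}"
  shows "lin delta c = c"
proof
  fix \<tau>
  have "lin delta c \<tau> = (\<Sum>\<sigma>\<in>insert \<tau> {\<sigma>. c \<sigma> \<noteq> 0}. c \<sigma> * delta \<sigma> \<tau>)"
    by (rule lin_superset) (use assms in auto)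
  also have "\<dots> = (\<Sum>\<sigma>\<in>insert \<tau> {\<sigma>. c \<sigma> \<noteq> 0}. if \<sigma> = \<tau> then c \<sigma> else 0)"
    by (rule sum.cong) (auto simp: delta_def)
  also have "\<dots> = c \<tau>" using assms by (simp add: sum.delta)
  finally show "lin delta c \<tau> = c \<tau>" .
qed

lemma lin_kadd: "lin (\<lambda>\<sigma> \<tau>. F \<sigma> \<tau> + G \<sigma> \<tau>) c = (\<lambda>\<tau>. lin F c \<tau> + lin G c \<tau>)"
  by (simp add: lin_def distrib_left sum.distrib)

lemma lin_kmult: "lin (\<lambda>\<sigma> \<tau>. a * F \<sigma> \<tau>) c = csmul a (lin F c)"
  by (simp add: lin_def csmul_def sum_distrib_left algebra_simps)

lemma lin_cong: "(\<And>\<sigma>. c \<sigma> \<noteq> 0 \<Longrightarrow> F \<sigma> = G \<sigma>) \<Longrightarrow> lin F c = lin G c"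
  unfolding lin_def by (rule ext, rule sum.cong) simp_all

lemma lin_supp:
  "{\<tau>. lin F c \<tau> \<noteq> 0} \<subseteq> (\<Union>\<sigma>\<in>{\<sigma>. c \<sigma> \<noteq> 0}. {\<tau>. F \<sigma> \<tau> \<noteq> 0})"
proof
  fix \<tau> assume "\<tau> \<in> {\<tau>. lin F c \<tau> \<noteq> 0}"
  then have "(\<Sum>\<sigma>\<in>{\<sigma>. c \<sigma> \<noteq> 0}. c \<sigma> * F \<sigma> \<tau>) \<noteq> 0" by (simp add: lin_def)
  then obtain \<sigma> where "\<sigma> \<in> {\<sigma>. c \<sigma> \<noteq> 0}" "c \<sigma> * F \<sigma> \<tau> \<noteq> 0"
    by (rule sum.not_neutral_contains_not_neutral)
  then show "\<tau> \<in> (\<Union>\<sigma>\<in>{\<sigma>. c \<sigma> \<noteq> 0}. {\<tau>. F \<sigma> \<tau> \<noteq> 0})" by auto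
qed

lemma lin_comp:
  assumes c: "finite {\<sigma>. c \<sigma> \<noteq> 0}" and F: "\<And>\<sigma>. c \<sigma> \<noteq> 0 \<Longrightarrow> finite {\<tau>. F \<sigma> \<tau> \<noteq> 0}"
  shows "lin G (lin F c) = lin (\<lambda>\<sigma>. lin G (F \<sigma>)) c"
proof
  fix \<tau>
  let ?A = "{\<sigma>. c \<sigma> \<noteq> 0}"
  let ?S = "\<Union>\<sigma>\<in>?A. {\<tau>. F \<sigma> \<tau> \<noteq> 0}"
  have fS: "finite ?S" using c F by auto
  have "lin G (lin F c) \<tau> = (\<Sum>\<rho>\<in>?S. lin F c \<rho> * G \<rho> \<tau>)"
    by (rule lin_superset[OF fS lin_supp])
  also have "\<dots> = (\<Sum>\<rho>\<in>?S. \<Sum>\<sigma>\<in>?A. c \<sigma> * F \<sigma> \<rho> * G \<rho> \<tau>)"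
    by (simp add: lin_def sum_distrib_right)
  also have "\<dots> = (\<Sum>\<sigma>\<in>?A. c \<sigma> * (\<Sum>\<rho>\<in>?S. F \<sigma> \<rho> * G \<rho> \<tau>))"
    by (subst sum.swap) (simp add: sum_distrib_left mult.assoc)
  also have "\<dots> = (\<Sum>\<sigma>\<in>?A. c \<sigma> * lin G (F \<sigma>) \<tau>)"
    by (rule sum.cong[OF refl]) (subst lin_superset[OF fS], auto)
  also have "\<dots> = lin (\<lambda>\<sigma>. lin G (F \<sigma>)) c \<tau>" by (simp add: lin_def)
  finally show "lin G (lin F c) \<tau> = lin (\<lambda>\<sigma>. lin G (F \<sigma>)) c \<tau>" .
qed

lemma esum_as_lin: "esum c = lin (\<lambda>_ (_::unit). 1) c ()"
  by (simp add: esum_def lin_def)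

lemma esum_lin_k:
  assumes c: "finite {\<sigma>. c \<sigma> \<noteq> 0}" and F: "\<And>\<sigma>. c \<sigma> \<noteq> 0 \<Longrightarrow> finite {\<tau>. F \<sigma> \<tau> \<noteq> 0}"
  shows "esum (lin F c) = (\<Sum>\<sigma>\<in>{\<sigma>. c \<sigma> \<noteq> 0}. c \<sigma> * esum (F \<sigma>))"
proof -
  have "esum (lin F c) = lin (\<lambda>_ (_::unit). 1) (lin F c) ()" by (rule esum_as_lin)
  also have "\<dots> = lin (\<lambda>\<sigma>. lin (\<lambda>_ (_::unit). 1) (F \<sigma>)) c ()"
    using lin_comp[OF c F, where G = "\<lambda>_ (_::unit). 1"] by (rule fun_cong)
  also have "\<dots> = (\<Sum>\<sigma>\<in>{\<sigma>. c \<sigma> \<noteq> 0}. c \<sigma> * esum (F \<sigma>))"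
    unfolding lin_def[of "\<lambda>\<sigma>. lin (\<lambda>_ _. 1) (F \<sigma>)"] by (simp only: esum_as_lin[symmetric])
  finally show ?thesis .
qed

definition bdF :: "complex \<Rightarrow> nat \<Rightarrow> ((nat \<Rightarrow> real) \<Rightarrow> 'a) \<Rightarrow> ((nat \<Rightarrow> real) \<Rightarrow> 'a) \<Rightarrow> complex" where
  "bdF q p \<sigma> = (\<lambda>\<tau>. \<Sum>j\<le>p. if singular_face p j \<sigma> = \<tau> then q ^ j else 0)"

lemma qbd_lin: "qbd q n c = (if 1 \<le> n then lin (bdF q (nat n)) c else 0)"
  unfolding qbd_def lin_def bdF_def by (rule refl)

lemma supp_bdF: "{\<tau>. bdF q p \<sigma> \<tau> \<noteq> 0} \<subseteq> (\<lambda>j. singular_face p j \<sigma>) ` {..p}"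
proof
  fix \<tau> assume "\<tau> \<in> {\<tau>. bdF q p \<sigma> \<tau> \<noteq> 0}"
  then have "(\<Sum>j\<le>p. if singular_face p j \<sigma> = \<tau> then q ^ j else 0) \<noteq> 0" by (simp add: bdF_def)
  then obtain j where "j \<in> {..p}" "(if singular_face p j \<sigma> = \<tau> then q ^ j else 0) \<noteq> 0"
    by (rule sum.not_neutral_contains_not_neutral)
  then have "j \<le> p" "singular_face p j \<sigma> = \<tau>" by (auto split: if_splits)
  then show "\<tau> \<in> (\<lambda>j. singular_face p j \<sigma>) ` {..p}" by auto
qed

lemma fin_bdF: "finite {\<tau>. bdF q p \<sigma> \<tau> \<noteq> 0}"
  by (rule finite_subset[OF supp_bdF]) simp

lemma lin_bdF: "lin G (bdF q p \<sigma>) \<tau> = (\<Sum>j\<le>p. q ^ j * G (singular_face p j \<sigma>) \<tau>)"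
proof -
  let ?S = "(\<lambda>j. singular_face p j \<sigma>) ` {..p}"
  have "lin G (bdF q p \<sigma>) \<tau> = (\<Sum>\<rho>\<in>?S. bdF q p \<sigma> \<rho> * G \<rho> \<tau>)"
    by (rule lin_superset[OF _ supp_bdF]) simp
  also have "\<dots> = (\<Sum>\<rho>\<in>?S. \<Sum>j\<le>p. (if singular_face p j \<sigma> = \<rho> then q ^ j * G \<rho> \<tau> else 0))"
    by (auto simp: bdF_def sum_distrib_right intro!: sum.cong)
  also have "\<dots> = (\<Sum>j\<le>p. \<Sum>\<rho>\<in>?S. (if singular_face p j \<sigma> = \<rho> then q ^ j * G \<rho> \<tau> else 0))"
    by (rule sum.swap)
  also have "\<dots> = (\<Sum>j\<le>p. q ^ j * G (singular_face p j \<sigma>) \<tau>)"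
    by (rule sum.cong[OF refl]) (simp add: sum.delta)
  finally show ?thesis .
qed

lemma esum_bdF: "esum (bdF q p \<sigma>) = qnum q (Suc p)"
proof -
  have "esum (bdF q p \<sigma>) = lin (\<lambda>_ (_::unit). 1) (bdF q p \<sigma>) ()" by (rule esum_as_lin)
  also have "\<dots> = (\<Sum>j\<le>p. q ^ j * 1)" by (rule lin_bdF)
  finally show ?thesis by (simp add: qnum_def lessThan_Suc_atMost)
qed

lemma bdF_Zq: "bdF q p \<sigma> \<tau> \<in> Zq q"
  unfolding bdF_def by (intro Zq_sum) (simp add: Zq_power Zq_q Zq_0)

lemma delta_Zq: "delta s \<tau> \<in> Zq q"
  by (simp add: delta_def Zq_0 Zq_1)

lemma lin_qchains:
  assumes c: "c \<in> qchains q T n"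
    and F: "\<And>\<sigma>. c \<sigma> \<noteq> 0 \<Longrightarrow> finite {\<tau>. F \<sigma> \<tau> \<noteq> 0}"
    and FZ: "\<And>\<sigma> \<tau>. c \<sigma> \<noteq> 0 \<Longrightarrow> F \<sigma> \<tau> \<in> Zq q"
    and FS: "\<And>\<sigma> \<tau>. c \<sigma> \<noteq> 0 \<Longrightarrow> F \<sigma> \<tau> \<noteq> 0 \<Longrightarrow> 0 \<le> m \<and> singular_simplex (nat m) T \<tau>"
  shows "lin F c \<in> qchains q T m"
proof -
  have cf: "finite {\<sigma>. c \<sigma> \<noteq> 0}" and cZ: "\<And>\<sigma>. c \<sigma> \<in> Zq q" using c by (auto simp: qchains_def)
  have "finite (\<Union>\<sigma>\<in>{\<sigma>. c \<sigma> \<noteq> 0}. {\<tau>. F \<sigma> \<tau> \<noteq> 0})" using cf F by auto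
  then have "finite {\<tau>. lin F c \<tau> \<noteq> 0}" using lin_supp finite_subset by metis
  moreover have "lin F c \<tau> \<in> Zq q" for \<tau> unfolding lin_def by (auto intro!: Zq_sum Zq_mult cZ FZ)
  moreover have "0 \<le> m \<and> singular_simplex (nat m) T \<tau>" if "lin F c \<tau> \<noteq> 0" for \<tau>
  proof -
    have "\<tau> \<in> (\<Union>\<sigma>\<in>{\<sigma>. c \<sigma> \<noteq> 0}. {\<tau>. F \<sigma> \<tau> \<noteq> 0})" using lin_supp[of F c] that by blast
    then obtain \<sigma> where "c \<sigma> \<noteq> 0" "F \<sigma> \<tau> \<noteq> 0" by blast
    then show ?thesis by (rule FS)
  qed
  ultimately show ?thesis by (auto simp: qchains_def)
qed

definition Hc :: "'b::real_vector \<Rightarrow> int \<Rightarrow> (((nat \<Rightarrow> real) \<Rightarrow> 'b) \<Rightarrow> complex) \<Rightarrow> (((nat \<Rightarrow> real) \<Rightarrow> 'b) \<Rightarrow> complex)" where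
  "Hc x0 n c = (if 0 \<le> n then lin (\<lambda>\<sigma>. delta (qcone (nat n) x0 \<sigma>)) c else 0)"

definition cstc :: "'b \<Rightarrow> int \<Rightarrow> (((nat \<Rightarrow> real) \<Rightarrow> 'b) \<Rightarrow> complex)" where
  "cstc x0 n = delta (cst_s (nat n) x0)"

lemma kernel_S:
  assumes p: "1 \<le> p" and \<sigma>: "\<sigma> \<in> extensional (standard_simplex p)"
  shows "bdF q (Suc p) (qcone p x0 \<sigma>) = (\<lambda>\<tau>. delta \<sigma> \<tau> + q * lin (\<lambda>\<rho>. delta (qcone (p - 1) x0 \<rho>)) (bdF q p \<sigma>) \<tau>)"
proof
  fix \<tau>
  have "bdF q (Suc p) (qcone p x0 \<sigma>) \<tau>
      = (if singular_face (Suc p) 0 (qcone p x0 \<sigma>) = \<tau> then 1 else 0)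
        + (\<Sum>j\<le>p. if singular_face (Suc p) (Suc j) (qcone p x0 \<sigma>) = \<tau> then q ^ Suc j else 0)"
    unfolding bdF_def by (subst sum.atMost_Suc_shift) simp
  also have "\<dots> = delta \<sigma> \<tau> + (\<Sum>j\<le>p. q * (q ^ j * delta (qcone (p - 1) x0 (singular_face p j \<sigma>)) \<tau>))"
    using p by (auto simp: face0_qcone[OF \<sigma>] faceS_qcone delta_def intro!: sum.cong)
  also have "\<dots> = delta \<sigma> \<tau> + q * lin (\<lambda>\<rho>. delta (qcone (p - 1) x0 \<rho>)) (bdF q p \<sigma>) \<tau>"
    by (simp add: lin_bdF sum_distrib_left)
  finally show "bdF q (Suc p) (qcone p x0 \<sigma>) \<tau> = delta \<sigma> \<tau> + q * lin (\<lambda>\<rho>. delta (qcone (p - 1) x0 \<rho>)) (bdF q p \<sigma>) \<tau>" .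
qed

lemma kernel_0:
  assumes \<sigma>: "\<sigma> \<in> extensional (standard_simplex 0)"
  shows "bdF q 1 (qcone 0 x0 \<sigma>) = (\<lambda>\<tau>. delta \<sigma> \<tau> + q * delta (cst_s 0 x0) \<tau>)"
proof (rule ext)
  fix \<tau>
  have "bdF q 1 (qcone 0 x0 \<sigma>) \<tau> = (if singular_face 1 0 (qcone 0 x0 \<sigma>) = \<tau> then 1 else 0)
     + (if singular_face 1 1 (qcone 0 x0 \<sigma>) = \<tau> then q else 0)"
    unfolding bdF_def by (simp add: atMost_Suc)
  also have "\<dots> = delta \<sigma> \<tau> + q * delta (cst_s 0 x0) \<tau>"
    using face0_qcone[OF \<sigma>, of x0] face1_qcone0[of x0 \<sigma>] by (simp add: delta_def)
  finally show "bdF q 1 (qcone 0 x0 \<sigma>) \<tau> = delta \<sigma> \<tau> + q * delta (cst_s 0 x0) \<tau>" .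
qed


lemma delta_fin: "finite {\<tau>. delta s \<tau> \<noteq> 0}"
proof -
  have "{\<tau>. delta s \<tau> \<noteq> 0} \<subseteq> {s}" by (auto simp: delta_def)
  then show ?thesis by (rule finite_subset) simp
qed

lemma esum_delta: "esum (delta s) = 1"
proof -
  have "esum (delta s) = sum (delta s) {s}" by (rule esum_superset) (auto simp: delta_def)
  then show ?thesis by (simp add: delta_def)
qed

context
  fixes S :: "'b::real_normed_vector set" and x0 :: 'b and q :: complex
  assumes x0: "x0 \<in> S" and S: "convex S"
begin

lemma qc_fin: "x \<in> qchains q (subtopology euclidean S) n \<Longrightarrow> finite {\<sigma>. x \<sigma> \<noteq> 0}"
  by (simp add: qchains_def)

lemma qc_val: "x \<in> qchains q (subtopology euclidean S) n \<Longrightarrow> x \<sigma> \<in> Zq q"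
  by (simp add: qchains_def)

lemma qc_sing: "x \<in> qchains q (subtopology euclidean S) n \<Longrightarrow> x \<sigma> \<noteq> 0 \<Longrightarrow> 0 \<le> n \<and> singular_simplex (nat n) (subtopology euclidean S) \<sigma>"
  by (simp add: qchains_def)

lemma qc_zero: "0 \<in> qchains q (subtopology euclidean S) n"
  by (simp add: qchains_def Zq_0)

lemma qc_diff:
  assumes "x \<in> qchains q (subtopology euclidean S) n" "y \<in> qchains q (subtopology euclidean S) n"
  shows "x - y \<in> qchains q (subtopology euclidean S) n"
proof -
  have "{\<sigma>. (x - y) \<sigma> \<noteq> 0} \<subseteq> {\<sigma>. x \<sigma> \<noteq> 0} \<union> {\<sigma>. y \<sigma> \<noteq> 0}" by auto
  then have "finite {\<sigma>. (x - y) \<sigma> \<noteq> 0}" using qc_fin[OF assms(1)] qc_fin[OF assms(2)] finite_subset by blast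
  moreover have "(x - y) \<sigma> \<in> Zq q" for \<sigma> using qc_val[OF assms(1)] qc_val[OF assms(2)] by (simp add: Zq_diff)
  moreover have "0 \<le> n \<and> singular_simplex (nat n) (subtopology euclidean S) \<sigma>" if "(x - y) \<sigma> \<noteq> 0" for \<sigma>
  proof -
    have "x \<sigma> \<noteq> 0 \<or> y \<sigma> \<noteq> 0" using that by auto
    then show ?thesis
    proof
      assume "x \<sigma> \<noteq> 0" then show ?thesis by (rule qc_sing[OF assms(1)])
    next
      assume "y \<sigma> \<noteq> 0" then show ?thesis by (rule qc_sing[OF assms(2)])
    qed
  qed
  ultimately show ?thesis by (simp add: qchains_def)
qed

lemma qc_smul:
  assumes "a \<in> Zq q" "x \<in> qchains q (subtopology euclidean S) n"
  shows "csmul a x \<in> qchains q (subtopology euclidean S) n"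
proof -
  have "{\<sigma>. csmul a x \<sigma> \<noteq> 0} \<subseteq> {\<sigma>. x \<sigma> \<noteq> 0}" by (auto simp: csmul_def)
  then have "finite {\<sigma>. csmul a x \<sigma> \<noteq> 0}" using qc_fin[OF assms(2)] finite_subset by blast
  moreover have "csmul a x \<sigma> \<in> Zq q" for \<sigma> using qc_val[OF assms(2)] assms(1) by (simp add: csmul_def Zq_mult)
  moreover have "0 \<le> n \<and> singular_simplex (nat n) (subtopology euclidean S) \<sigma>" if "csmul a x \<sigma> \<noteq> 0" for \<sigma>
    using that qc_sing[OF assms(2)] by (auto simp: csmul_def)
  ultimately show ?thesis by (simp add: qchains_def)
qed

lemma qc_neg: "n < 0 \<Longrightarrow> x \<in> qchains q (subtopology euclidean S) n \<Longrightarrow> x = 0"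
  by (auto simp: qchains_def fun_eq_iff)

lemma qbd_C:
  assumes x: "x \<in> qchains q (subtopology euclidean S) n"
  shows "qbd q n x \<in> qchains q (subtopology euclidean S) (n - 1)"
proof (cases "1 \<le> n")
  case True
  have "lin (bdF q (nat n)) x \<in> qchains q (subtopology euclidean S) (n - 1)"
  proof (rule lin_qchains[OF x fin_bdF bdF_Zq])
    fix \<sigma> \<tau> assume s: "x \<sigma> \<noteq> 0" and t: "bdF q (nat n) \<sigma> \<tau> \<noteq> 0"
    obtain j where j: "j \<le> nat n" "\<tau> = singular_face (nat n) j \<sigma>" using supp_bdF[of q "nat n" \<sigma>] t by blast
    have "singular_simplex (nat n) (subtopology euclidean S) \<sigma>" using qc_sing[OF x s] by simp
    then have "singular_simplex (nat n - Suc 0) (subtopology euclidean S) \<tau>"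
      using singular_simplex_singular_face[of "nat n" _ \<sigma> j] j True by simp
    moreover have "nat n - Suc 0 = nat (n - 1)" using True by simp
    ultimately show "0 \<le> n - 1 \<and> singular_simplex (nat (n - 1)) (subtopology euclidean S) \<tau>" using True by simp
  qed
  then show ?thesis using True by (simp add: qbd_lin)
qed (simp add: qbd_lin qc_zero)

lemma qbd_diff:
  assumes "x \<in> qchains q (subtopology euclidean S) n" "y \<in> qchains q (subtopology euclidean S) n"
  shows "qbd q n (x - y) = qbd q n x - qbd q n y"
  by (simp add: qbd_lin lin_diff[OF qc_fin[OF assms(1)] qc_fin[OF assms(2)]])

lemma qbd_smul:
  assumes "a \<in> Zq q" "x \<in> qchains q (subtopology euclidean S) n"
  shows "qbd q n (csmul a x) = csmul a (qbd q n x)"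
  by (simp add: qbd_lin lin_csmul[OF qc_fin[OF assms(2)]])

lemma Hc_C:
  assumes x: "x \<in> qchains q (subtopology euclidean S) n"
  shows "Hc x0 n x \<in> qchains q (subtopology euclidean S) (n + 1)"
proof (cases "0 \<le> n")
  case True
  have "lin (\<lambda>\<sigma>. delta (qcone (nat n) x0 \<sigma>)) x \<in> qchains q (subtopology euclidean S) (n + 1)"
  proof (rule lin_qchains[OF x delta_fin delta_Zq])
    fix \<sigma> \<tau> assume s: "x \<sigma> \<noteq> 0" and t: "delta (qcone (nat n) x0 \<sigma>) \<tau> \<noteq> 0"
    have t': "\<tau> = qcone (nat n) x0 \<sigma>" using t by (simp add: delta_def split: if_splits)
    have "singular_simplex (nat n) (subtopology euclidean S) \<sigma>" using qc_sing[OF x s] by simp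
    then have "singular_simplex (Suc (nat n)) (subtopology euclidean S) \<tau>"
      unfolding t' by (rule qcone_simplex[OF _ x0 S])
    moreover have "Suc (nat n) = nat (n + 1)" using True by simp
    ultimately show "0 \<le> n + 1 \<and> singular_simplex (nat (n + 1)) (subtopology euclidean S) \<tau>" using True by simp
  qed
  then show ?thesis using True by (simp add: Hc_def)
qed (simp add: Hc_def qc_zero)

lemma Hc_diff:
  assumes "x \<in> qchains q (subtopology euclidean S) n" "y \<in> qchains q (subtopology euclidean S) n"
  shows "Hc x0 n (x - y) = Hc x0 n x - Hc x0 n y"
  by (simp add: Hc_def lin_diff[OF qc_fin[OF assms(1)] qc_fin[OF assms(2)]])

lemma Hc_smul:
  assumes "a \<in> Zq q" "x \<in> qchains q (subtopology euclidean S) n"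
  shows "Hc x0 n (csmul a x) = csmul a (Hc x0 n x)"
  by (simp add: Hc_def lin_csmul[OF qc_fin[OF assms(2)]])

lemma esum_qbd:
  assumes n: "1 \<le> n" and x: "x \<in> qchains q (subtopology euclidean S) n"
  shows "esum (qbd q n x) = qnum q (nat n + 1) * esum x"
proof -
  have "esum (qbd q n x) = esum (lin (bdF q (nat n)) x)" using n by (simp add: qbd_lin)
  also have "\<dots> = (\<Sum>\<sigma>\<in>{\<sigma>. x \<sigma> \<noteq> 0}. x \<sigma> * esum (bdF q (nat n) \<sigma>))"
    by (rule esum_lin_k[OF qc_fin[OF x] fin_bdF])
  also have "\<dots> = qnum q (nat n + 1) * esum x"
    by (simp only: esum_bdF) (simp add: esum_def sum_distrib_left mult.commute)
  finally show ?thesis .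
qed

lemma htpy_c:
  assumes x: "x \<in> qchains q (subtopology euclidean S) n" and n: "0 \<le> n" and e: "n \<noteq> 0 \<or> esum x = 0"
  shows "qbd q (n + 1) (Hc x0 n x) = x + csmul q (Hc x0 (n - 1) (qbd q n x))"
proof -
  define p where "p = nat n"
  have xf: "finite {\<sigma>. x \<sigma> \<noteq> 0}" by (rule qc_fin[OF x])
  have ext: "\<sigma> \<in> extensional (standard_simplex p)" if "x \<sigma> \<noteq> 0" for \<sigma>
    using qc_sing[OF x that] by (simp add: singular_simplex_def p_def)
  have L: "qbd q (n + 1) (Hc x0 n x) = lin (\<lambda>\<sigma>. bdF q (Suc p) (qcone p x0 \<sigma>)) x"
  proof -
    have "qbd q (n + 1) (Hc x0 n x) = lin (bdF q (Suc p)) (lin (\<lambda>\<sigma>. delta (qcone p x0 \<sigma>)) x)"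
      using n by (simp add: qbd_lin Hc_def p_def nat_add_distrib)
    also have "\<dots> = lin (\<lambda>\<sigma>. lin (bdF q (Suc p)) (delta (qcone p x0 \<sigma>))) x"
      by (rule lin_comp[OF xf delta_fin])
    also have "\<dots> = lin (\<lambda>\<sigma>. bdF q (Suc p) (qcone p x0 \<sigma>)) x"
      by (simp only: lin_delta)
    finally show ?thesis .
  qed
  show ?thesis
  proof (cases "n = 0")
    case False
    have p1: "1 \<le> p" using False n by (simp add: p_def)
    define K where "K \<sigma> = lin (\<lambda>\<rho>. delta (qcone (p - 1) x0 \<rho>)) (bdF q p \<sigma>)" for \<sigma>
    have "lin (\<lambda>\<sigma>. bdF q (Suc p) (qcone p x0 \<sigma>)) x = lin (\<lambda>\<sigma> \<tau>. delta \<sigma> \<tau> + q * K \<sigma> \<tau>) x"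
      by (rule lin_cong) (simp add: kernel_S[OF p1 ext] K_def)
    also have "\<dots> = x + csmul q (lin K x)"
      by (simp only: lin_kadd lin_kmult lin_id[OF xf]) (simp add: plus_fun_def)
    also have "lin K x = Hc x0 (n - 1) (qbd q n x)"
    proof -
      have "Hc x0 (n - 1) (qbd q n x) = lin (\<lambda>\<rho>. delta (qcone (p - 1) x0 \<rho>)) (lin (bdF q p) x)"
        using False n by (simp add: qbd_lin Hc_def p_def nat_diff_distrib)
      also have "\<dots> = lin K x" unfolding K_def by (rule lin_comp[OF xf fin_bdF])
      finally show ?thesis by simp
    qed
    finally have "lin (\<lambda>\<sigma>. bdF q (Suc p) (qcone p x0 \<sigma>)) x = x + csmul q (Hc x0 (n - 1) (qbd q n x))" .
    with L show ?thesis by (simp only:)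
  next
    case True
    have p0: "p = 0" using True by (simp add: p_def)
    have "lin (\<lambda>\<sigma>. bdF q (Suc p) (qcone p x0 \<sigma>)) x = lin (\<lambda>\<sigma> \<tau>. delta \<sigma> \<tau> + q * delta (cst_s 0 x0) \<tau>) x"
    proof (rule lin_cong)
      fix \<sigma> assume "x \<sigma> \<noteq> 0"
      then have "\<sigma> \<in> extensional (standard_simplex 0)" using ext p0 by simp
      from kernel_0[OF this, of q x0] show "bdF q (Suc p) (qcone p x0 \<sigma>) = (\<lambda>\<tau>. delta \<sigma> \<tau> + q * delta (cst_s 0 x0) \<tau>)"
        using p0 by simp
    qed
    also have "\<dots> = x + csmul q (lin (\<lambda>\<sigma> \<tau>. delta (cst_s 0 x0) \<tau>) x)"
      by (simp only: lin_kadd lin_kmult lin_id[OF xf]) (simp add: plus_fun_def)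
    also have "lin (\<lambda>\<sigma> \<tau>. delta (cst_s 0 x0) \<tau>) x = csmul (esum x) (delta (cst_s 0 x0))"
      by (simp add: lin_def csmul_def esum_def sum_distrib_right fun_eq_iff)
    also have "\<dots> = 0" using e True by (simp add: csmul_def fun_eq_iff)
    finally have "lin (\<lambda>\<sigma>. bdF q (Suc p) (qcone p x0 \<sigma>)) x = x" by (simp add: csmul_def)
    moreover have "Hc x0 (n - 1) (qbd q n x) = 0" using True by (simp add: Hc_def)
    ultimately show ?thesis using L by simp
  qed
qed

lemma cst_C:
  assumes "0 \<le> n" shows "cstc x0 n \<in> qchains q (subtopology euclidean S) n"
proof -
  have "delta (cst_s (nat n) x0) \<sigma> \<noteq> 0 \<Longrightarrow> 0 \<le> n \<and> singular_simplex (nat n) (subtopology euclidean S) \<sigma>" for \<sigma>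
    using assms cst_simplex[OF x0, of "nat n"] by (simp add: delta_def split: if_splits)
  then show ?thesis unfolding qchains_def cstc_def using delta_fin[of "cst_s (nat n) x0"] delta_Zq[of _ _ q] by auto
qed

lemma esum_cstc: "esum (cstc x0 n) = 1"
  by (simp add: cstc_def esum_delta)

lemma d_cst:
  assumes "1 \<le> n"
  shows "qbd q n (cstc x0 n) = csmul (qnum q (nat n + 1)) (cstc x0 (n - 1))"
proof -
  have "qbd q n (cstc x0 n) = bdF q (nat n) (cst_s (nat n) x0)"
    using assms by (simp add: qbd_lin cstc_def lin_delta)
  also have "\<dots> = (\<lambda>\<tau>. \<Sum>j\<le>nat n. if cst_s (nat n - 1) x0 = \<tau> then q ^ j else 0)"
  proof -
    have fc: "\<And>j. j \<in> {..nat n} \<Longrightarrow> singular_face (nat n) j (cst_s (nat n) x0) = cst_s (nat n - 1) x0"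
    proof -
      have "1 \<le> nat n" using assms by simp
      then show "\<And>j. j \<in> {..nat n} \<Longrightarrow> singular_face (nat n) j (cst_s (nat n) x0) = cst_s (nat n - 1) x0"
        using face_cst by auto
    qed
    show ?thesis unfolding bdF_def by (rule ext, rule sum.cong[OF refl]) (simp only: fc)
  qed
  also have "\<dots> = csmul (qnum q (nat n + 1)) (cstc x0 (n - 1))"
  proof (rule ext)
    fix \<tau>
    have "nat (n - 1) = nat n - 1" using assms by simp
    then show "(\<Sum>j\<le>nat n. if cst_s (nat n - 1) x0 = \<tau> then q ^ j else 0) = csmul (qnum q (nat n + 1)) (cstc x0 (n - 1)) \<tau>"
      unfolding csmul_def cstc_def delta_def qnum_def by (simp add: lessThan_Suc_atMost)
  qed
  finally show ?thesis .
qed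

lemma qcx_interp:
  assumes "prime N" "3 \<le> N" "q ^ N = 1" "q \<noteq> 1"
  shows "qcx (qchains q (subtopology euclidean S)) (qbd q) (Hc x0) (cstc x0) q N"
proof (rule qcx.intro)
  show "grp_cx (qchains q (subtopology euclidean S)) (qbd q)"
    apply (rule grp_cx.intro)
       apply (rule qc_zero)
      apply (erule (1) qc_diff)
     apply (erule qbd_C)
    apply (erule (1) qbd_diff)
    done
  show "qcx_axioms (qchains q (subtopology euclidean S)) (qbd q) (Hc x0) (cstc x0) q N"
    apply (rule qcx_axioms.intro)
                    apply (erule qc_fin)
                   apply (erule qc_val)
                  apply (erule (1) qc_smul)
                 apply (erule (1) qc_neg)
                apply (erule (1) qbd_smul)
               apply (erule Hc_C)
              apply (erule (1) Hc_diff)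
             apply (erule (1) Hc_smul)
            apply (erule (1) esum_qbd)
           apply (erule (2) htpy_c)
          apply (erule cst_C)
         apply (rule esum_cstc)
        apply (erule d_cst)
       apply (rule assms)+
    done
qed

end


theorem theorem5p2:
  fixes N :: nat and q :: complex and X :: "(real ^ 'n) set"
  assumes "prime N" and "N \<ge> 3"
    and "q ^ N = 1" and "q \<noteq> 1"
    and "CARD('n) = N - 1"
    and "convex X" and "X \<noteq> {}"
  shows "\<forall>m n. 1 \<le> m \<and> m \<le> N - 1 \<longrightarrow>
     (\<forall>a\<in>Zq q. \<forall>x\<in>qchains q (subtopology euclidean X) n. \<forall>y\<in>qchains q (subtopology euclidean X) n.
        eta N n (\<lambda>\<sigma>. a * x \<sigma> + y \<sigma>) = a * eta N n x + eta N n y)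
   \<and> bij_betw (amp_induced (eta N) (zq_cx q N) (zq_d q N) N m n)
       (amp_hom (qchains q (subtopology euclidean X)) (qbd q) N m n)
       (amp_hom (zq_cx q N) (zq_d q N) N m n)"
proof -
  obtain x0 where x0: "x0 \<in> X" using assms(7) by blast
  interpret Q: qcx "qchains q (subtopology euclidean X)" "qbd q" "Hc x0" "cstc x0" q N
    by (rule qcx_interp[OF x0 assms(6) assms(1) assms(2) assms(3) assms(4)])
  show ?thesis
  proof (intro allI impI conjI ballI)
    fix m :: nat and n :: int and a x y
    assume "1 \<le> m \<and> m \<le> N - 1" "a \<in> Zq q"
      and x: "x \<in> qchains q (subtopology euclidean X) n" and y: "y \<in> qchains q (subtopology euclidean X) n"
    show "eta N n (\<lambda>\<sigma>. a * x \<sigma> + y \<sigma>) = a * eta N n x + eta N n y"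
      unfolding eta_etag1 etag_def using esum_lin[OF Q.C_fin[OF x] Q.C_fin[OF y], of a] by simp
  next
    fix m :: nat and n :: int
    assume m: "1 \<le> m \<and> m \<le> N - 1"
    show "bij_betw (amp_induced (eta N) (zq_cx q N) (zq_d q N) N m n)
       (amp_hom (qchains q (subtopology euclidean X)) (qbd q) N m n)
       (amp_hom (zq_cx q N) (zq_d q N) N m n)"
      using Q.main_bij[of m n] m by (simp add: eta_etag)
  qed
qed


end
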